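(* For every unit vector $|\psi\rangle$ with reduced-state eigenvalues $p_1,\dots,p_d$, one has $\mathcal{E}_\star(\psi)=E_L(\psi)$ if and only if the quantity $\big|\sum_{i=1}^d\lambda_ip_{\sigma(i)}\big|$ takes the same value for all permutations $\sigma\in S_d$, where $\lambda_i=e^{i\theta_i}$ is the stellar spectrum. In particular, for $d=2$ and $d=3$, $\mathcal{E}_\star(\psi)=E_L(\psi)$ for all pure states $|\psi\rangle$.
   Context: Let $d=d_A\le d_B$, $d\ge 2$. The stellar spectrum is $\lambda_j=e^{i\theta_j}$, $\theta_j=\frac{(d-2j+1)\pi}{d}$, $j=1,\dots,d$. The stellar mirror entanglement is $\mathcal{E}_\star(\psi)=1-\max_W|\langle\psi|(W\otimes\mathbb{1})|\psi\rangle|^2$, the maximum over all unitaries $W$ on $\mathbb{C}^{d_A}$ whose eigenvalues are exactly the stellar spectrum. The linear entropy of entanglement is $E_L(\psi)=\frac{d}{d-1}\big(1-\sum_ip_i^2\big)$, where $p_i$ are the eigenvalues of $\mathrm{Tr}_B|\psi\rangle\langle\psi|$. *)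

theory Defs
  imports Complex_Main "HOL-Combinatorics.Permutations" "Jordan_Normal_Form.Schur_Decomposition"
begin

(* States of C^{dA} \<otimes> C^{dB} are vectors of dimension dA*dB; the basis vector
   |a>|b> (a < dA, b < dB) has index a*dB + b. *)

definition stellar_lambda :: "nat \<Rightarrow> nat \<Rightarrow> complex" where
  "stellar_lambda d i = cis ((real d - 2 * real (Suc i) + 1) * pi / real d)"
  (* lambda_j for j = i+1, i = 0..d-1 *)

definition unitary_mat :: "nat \<Rightarrow> complex mat \<Rightarrow> bool" where
  "unitary_mat n W \<longleftrightarrow> W \<in> carrier_mat n n \<and> W * mat_adjoint W = 1\<^sub>m n \<and> mat_adjoint W * W = 1\<^sub>m n"

definition stellar_unitary :: "nat \<Rightarrow> complex mat \<Rightarrow> bool" where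
  "stellar_unitary d W \<longleftrightarrow> unitary_mat d W \<and>
     char_poly W = (\<Prod>i<d. [:- stellar_lambda d i, 1:])"

(* W \<otimes> 1_{dB} acting on C^{dA} \<otimes> C^{dB} *)
definition tensor_id :: "nat \<Rightarrow> nat \<Rightarrow> complex mat \<Rightarrow> complex mat" where
  "tensor_id dA dB W = mat (dA * dB) (dA * dB)
     (\<lambda>(i, j). if i mod dB = j mod dB then W $$ (i div dB, j div dB) else 0)"

definition expect :: "complex vec \<Rightarrow> complex mat \<Rightarrow> complex" where
  "expect psi X = (\<Sum>i<dim_vec psi. cnj (psi $ i) * (X *\<^sub>v psi) $ i)"

definition unit_state :: "nat \<Rightarrow> nat \<Rightarrow> complex vec \<Rightarrow> bool" where
  "unit_state dA dB psi \<longleftrightarrow> psi \<in> carrier_vec (dA * dB) \<and>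
     (\<Sum>i<dA * dB. (cmod (psi $ i))\<^sup>2) = 1"

definition reduced_state :: "nat \<Rightarrow> nat \<Rightarrow> complex vec \<Rightarrow> complex mat" where
  "reduced_state dA dB psi = mat dA dA
     (\<lambda>(a, a'). \<Sum>b<dB. psi $ (a * dB + b) * cnj (psi $ (a' * dB + b)))"

(* stellar mirror entanglement (max over the compact set of admissible W, written as Sup) *)
definition stellar_ent :: "nat \<Rightarrow> nat \<Rightarrow> complex vec \<Rightarrow> real" where
  "stellar_ent dA dB psi = 1 - (SUP W \<in> {W. stellar_unitary dA W}.
      (cmod (expect psi (tensor_id dA dB W)))\<^sup>2)"

(* linear entropy of entanglement in terms of the reduced-state eigenvalues p_0..p_{d-1} *)
definition linear_entropy :: "nat \<Rightarrow> (nat \<Rightarrow> real) \<Rightarrow> real" where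
  "linear_entropy d p = real d / (real d - 1) * (1 - (\<Sum>i<d. (p i)\<^sup>2))"

end

theory Submission
  imports Defs
begin


lemma adj_dims[simp]: "dim_row (mat_adjoint A) = dim_col A" "dim_col (mat_adjoint A) = dim_row A"
  unfolding mat_adjoint_def by auto

lemma adj_index[simp]: "i < dim_col A \<Longrightarrow> j < dim_row A \<Longrightarrow> mat_adjoint A $$ (i,j) = cnj (A $$ (j,i))"
  unfolding mat_adjoint_def mat_of_rows_def by auto

lemma adj_carrier[simp]: "A \<in> carrier_mat n m \<Longrightarrow> mat_adjoint A \<in> carrier_mat m n"
  unfolding carrier_mat_def by simp

lemma mult_index': "i < dim_row A \<Longrightarrow> j < dim_col B \<Longrightarrow> dim_col A = dim_row B \<Longrightarrow>
   (A * B) $$ (i,j) = (\<Sum>k<dim_row B. A $$ (i,k) * B $$ (k,j))"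
  by (auto simp: scalar_prod_def lessThan_atLeast0 intro!: sum.cong)

lemma adj_adj[simp]: "mat_adjoint (mat_adjoint (A::complex mat)) = A"
  by (rule eq_matI) auto

lemma adj_mult: assumes A: "A \<in> carrier_mat n m" and B: "B \<in> carrier_mat m k" shows
   "mat_adjoint (A * (B::complex mat)) = mat_adjoint B * mat_adjoint A"
proof -
  have dA: "dim_row A = n" "dim_col A = m" and dB: "dim_row B = m" "dim_col B = k" using A B by auto
  show ?thesis
proof (rule eq_matI)
  fix i j assume "i < dim_row (mat_adjoint B * mat_adjoint A)" "j < dim_col (mat_adjoint B * mat_adjoint A)"
  then have ij: "i < k" "j < n" using A B by auto
  have "mat_adjoint (A * B) $$ (i, j) = cnj ((A*B) $$ (j,i))" using ij A B by simp
  also have "\<dots> = cnj (\<Sum>l<m. A $$ (j,l) * B $$ (l,i))" using ij A B by (subst mult_index') auto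
  also have "\<dots> = (\<Sum>l<m. mat_adjoint B $$ (i,l) * mat_adjoint A $$ (l,j))"
    using ij A B by (auto simp: cnj_sum mult.commute intro!: sum.cong)
  also have "\<dots> = (mat_adjoint B * mat_adjoint A) $$ (i, j)" using ij A B by (subst mult_index') auto
  finally show "mat_adjoint (A * B) $$ (i, j) = (mat_adjoint B * mat_adjoint A) $$ (i, j)" .
next
  show "dim_row (mat_adjoint (A * B)) = dim_row (mat_adjoint B * mat_adjoint A)" using dA dB by (simp only: adj_dims index_mult_mat)
next
  show "dim_col (mat_adjoint (A * B)) = dim_col (mat_adjoint B * mat_adjoint A)" using dA dB by (simp only: adj_dims index_mult_mat)
qed
qed

lemma "True" by simp
lemma adj_one[simp]: "mat_adjoint (1\<^sub>m n :: complex mat) = 1\<^sub>m n"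
  by (rule eq_matI) simp_all


definition nrm :: "complex vec \<Rightarrow> complex vec" where
  "nrm w = complex_of_real (1 / sqrt (Re (w \<bullet>c w))) \<cdot>\<^sub>v w"

lemma csq_real: fixes w :: "complex vec" shows "w \<bullet>c w = complex_of_real (Re (w \<bullet>c w))" "Re (w \<bullet>c w) \<ge> 0"
  using conjugate_square_ge_0_vec[of w] by (auto simp: less_eq_complex_def complex_eq_iff)

lemma csq_pos: fixes w :: "complex vec" assumes "w \<in> carrier_vec n" "w \<noteq> 0\<^sub>v n"
  shows "Re (w \<bullet>c w) > 0"
proof -
  have "w \<bullet>c w \<noteq> 0" using assms conjugate_square_eq_0_vec[of w n] by auto
  then have "Re (w \<bullet>c w) \<noteq> 0" using csq_real(1)[of w] by (metis of_real_0)
  then show ?thesis using csq_real(2)[of w] by linarith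
qed

lemma nrm_carrier[simp]: "w \<in> carrier_vec n \<Longrightarrow> nrm w \<in> carrier_vec n"
  unfolding nrm_def by simp

lemma nrm_sprod: fixes v w :: "complex vec" assumes "v \<in> carrier_vec n" "w \<in> carrier_vec n"
  shows "nrm v \<bullet>c nrm w = complex_of_real (1 / sqrt (Re (v \<bullet>c v)) * (1 / sqrt (Re (w \<bullet>c w)))) * (v \<bullet>c w)"
  using assms unfolding nrm_def
  by (simp add: conjugate_smult_vec)

lemma nrm_self: fixes w :: "complex vec" assumes "w \<in> carrier_vec n" "w \<noteq> 0\<^sub>v n"
  shows "nrm w \<bullet>c nrm w = 1"
proof -
  define s where "s = Re (w \<bullet>c w)"
  have s: "s > 0" using csq_pos[OF assms] unfolding s_def .
  have "nrm w \<bullet>c nrm w = complex_of_real (1 / sqrt s * (1 / sqrt s)) * complex_of_real s"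
    using nrm_sprod[OF assms(1) assms(1)] csq_real(1)[of w] unfolding s_def by metis
  also have "\<dots> = complex_of_real (1 / sqrt s * (1 / sqrt s) * s)" by simp
  also have "1 / sqrt s * (1 / sqrt s) * s = 1" using s
    by (simp add: field_simps)
  finally show ?thesis by simp
qed

lemma unitary_schur:
  fixes A :: "complex mat"
  assumes "A \<in> carrier_mat n n" "char_poly A = (\<Prod>e\<leftarrow>es. [:- e, 1:])"
  shows "\<exists>U B. unitary_mat n U \<and> B \<in> carrier_mat n n \<and> upper_triangular B \<and> diag_mat B = es
     \<and> A = U * B * mat_adjoint U"
  using assms
proof (induct es arbitrary: n A)
  case Nil
  with degree_monic_char_poly[of A n] have n: "n = 0" by auto
  show ?case
    by (rule exI[of _ "1\<^sub>m n"], rule exI[of _ A]) 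
       (use Nil n in \<open>auto simp: unitary_mat_def diag_mat_def upper_triangular_def\<close>)
next
  case (Cons e es n A)
  let ?n1 = "n - 1"
  from Cons have A: "A \<in> carrier_mat n n" and dim: "dim_row A = n" by auto
  let ?cp = "char_poly A"
  from Cons(3)
  have cp: "?cp = [: -e, 1 :] * (\<Prod>e \<leftarrow> es. [:- e, 1:])" by auto
  have mon: "monic (\<Prod>e\<leftarrow> es. [:- e, 1:])" by (rule monic_prod_list, auto)
  have deg: "degree ?cp = Suc (degree (\<Prod>e\<leftarrow> es. [:- e, 1:]))" unfolding cp
    by (subst degree_mult_eq, insert mon, auto)
  with degree_monic_char_poly[OF A] have n: "n \<noteq> 0" by auto
  define v where "v = find_eigenvector A e"
  define b where "b = basis_completion v"
  define ws0 where "ws0 = gram_schmidt n b"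
  define ws where "ws = map nrm ws0"
  define W where "W = mat_of_cols n ws"
  define W' where "W' = corthogonal_inv W"
  define A' where "A' = W' * A * W"
  obtain A1 A2 A0 A3 where splitA': "split_block A' 1 1 = (A1,A2,A0,A3)"
    by (cases "split_block A' 1 1", auto)
  have e: "eigenvalue A e" 
    unfolding eigenvalue_root_char_poly[OF A] cp by simp
  from find_eigenvector[OF A e] have ev: "eigenvector A v e" unfolding v_def .
  from this[unfolded eigenvector_def]
  have v[simp]: "v \<in> carrier_vec n" and v0: "v \<noteq> 0\<^sub>v n" using A by auto
  interpret cof_vec_space n "TYPE(complex)" .
  from basis_completion[OF v v0, folded b_def]
  have span_b: "span (set b) = carrier_vec n" and dist_b: "distinct b" 
    and indep: "\<not> lin_dep (set b)" and b: "set b \<subseteq> carrier_vec n" and hdb: "hd b = v" 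
    and len_b: "length b = n" by auto
  from hdb len_b n obtain vs where bv: "b = v # vs" by (cases b, auto)
  from gram_schmidt_result[OF b dist_b indep refl, folded ws0_def]
  have ws0: "set ws0 \<subseteq> carrier_vec n" "corthogonal ws0" "length ws0 = n" 
    by (auto simp: len_b)
  from gram_schmidt_hd[OF v, of vs, folded bv] have hdws0: "hd ws0 = v" unfolding ws0_def .
  have ws0nz: "ws0 ! i \<noteq> 0\<^sub>v n" if "i < n" for i
  proof
    assume "ws0 ! i = 0\<^sub>v n"
    then have "ws0 ! i \<bullet>c ws0 ! i = 0" by simp
    then show False using corthogonalD[OF ws0(2), of i i] that ws0(3) by auto
  qed
  have ws: "set ws \<subseteq> carrier_vec n" "length ws = n" using ws0 unfolding ws_def by auto
  have wsi: "ws ! i = nrm (ws0 ! i)" if "i < n" for i using that ws0(3) unfolding ws_def by simp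
  have ws0c: "ws0 ! i \<in> carrier_vec n" if "i < n" for i using that ws0 by auto
  have orth_ws: "corthogonal ws"
  proof (rule corthogonalI)
    fix i j assume ij: "i < length ws" "j < length ws"
    then have ij': "i < n" "j < n" using ws by auto
    have "ws ! i \<bullet>c ws ! j = complex_of_real (1 / sqrt (Re (ws0!i \<bullet>c ws0!i)) * (1 / sqrt (Re (ws0!j \<bullet>c ws0!j)))) * (ws0!i \<bullet>c ws0!j)"
      using nrm_sprod[OF ws0c[OF ij'(1)] ws0c[OF ij'(2)]] wsi ij' by simp
    moreover have "Re (ws0!i \<bullet>c ws0!i) > 0" "Re (ws0!j \<bullet>c ws0!j) > 0"
      using csq_pos ws0c ws0nz ij' by blast+
    ultimately have "(ws ! i \<bullet>c ws ! j = 0) = (ws0!i \<bullet>c ws0!j = 0)" by simp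
    also have "\<dots> = (i \<noteq> j)" using corthogonalD[OF ws0(2)] ij' ws0(3) by auto
    finally show "(ws ! i \<bullet>c ws ! j = 0) = (i \<noteq> j)" .
  qed
  have wsnorm: "ws ! i \<bullet>c ws ! i = 1" if "i < n" for i
    using nrm_self[OF ws0c[OF that] ws0nz[OF that]] wsi[OF that] by simp
  define v' where "v' = hd ws"
  have hdws: "hd ws = v'" unfolding v'_def ..
  have v'eq: "v' = nrm v" unfolding v'_def ws_def using hdws0 ws0(3) n by (cases ws0, auto)
  have v'c: "v' \<in> carrier_vec n" unfolding v'eq by simp
  have v'0: "v' \<noteq> 0\<^sub>v n"
  proof
    assume "v' = 0\<^sub>v n"
    then have "v' \<bullet>c v' = 0" by simp
    moreover have "v' \<bullet>c v' = 1" unfolding v'eq using nrm_self[OF v v0] .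
    ultimately show False by simp
  qed
  have eigen: "A *\<^sub>v v = e \<cdot>\<^sub>v v" using ev A unfolding eigenvector_def by auto
  have eigen': "A *\<^sub>v v' = e \<cdot>\<^sub>v v'" unfolding v'eq nrm_def
    using mult_mat_vec[OF A v] eigen by (auto simp: smult_smult_assoc mult.commute)
  have W: "W \<in> carrier_mat n n"
    using ws unfolding W_def using mat_of_cols_carrier(1)[of n ws] by auto
  have W'adj: "W' = mat_adjoint W"
  proof -
    have colsW: "cols W = ws" unfolding W_def using ws by simp
    have "map vec_inv ws = map conjugate ws"
    proof (rule nth_equalityI)
      fix i assume "i < length (map vec_inv ws)"
      then have i: "i < n" using ws by simp
      show "map vec_inv ws ! i = map conjugate ws ! i"
        using i ws wsnorm[OF i] by (simp add: vec_inv_def)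
    qed simp
    then show ?thesis unfolding W'_def corthogonal_inv_def mat_adjoint_def colsW by (rule arg_cong)
  qed
  have W': "W' \<in> carrier_mat n n" unfolding W'adj using W by simp
  have orth_W: "corthogonal_mat W" using orthogonal_mat_of_cols orth_ws ws unfolding W_def by auto
  from corthogonal_inv_result[OF orth_W] 
  have W'W: "inverts_mat W' W" unfolding W'_def .
  hence WW': "inverts_mat W W'" using mat_mult_left_right_inverse[OF W' W] W' W
    unfolding inverts_mat_def by auto
  have W'W1: "W' * W = 1\<^sub>m n" and WW'1: "W * W' = 1\<^sub>m n" using W'W WW' W W' unfolding inverts_mat_def by auto
  have A': "A' \<in> carrier_mat n n" using W W' A unfolding A'_def by auto
  have A'A_wit: "similar_mat_wit A' A W' W"
    by (rule similar_mat_witI[of _ _ n], insert W W' A A' W'W WW', auto simp: A'_def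
    inverts_mat_def)
  hence A'A: "similar_mat A' A" unfolding similar_mat_def by blast
  from similar_mat_wit_sym[OF A'A_wit] have simAA': "similar_mat_wit A A' W W'" by auto
  let ?f = "(\<lambda> i. if i = 0 then e else 0)"
  have col0: "col A' 0 = vec n ?f"
    unfolding A'_def W'_def W_def
    using corthogonal_col_ev_0[OF A v'c v'0 eigen' n hdws ws(1) orth_ws ws(2)] .
  from A' n have "dim_row A' = 1 + ?n1" "dim_col A' = 1 + ?n1" by auto
  from split_block[OF splitA' this] have A2: "A2 \<in> carrier_mat 1 ?n1"
    and A3: "A3 \<in> carrier_mat ?n1 ?n1" 
    and A'block: "A' = four_block_mat A1 A2 A0 A3" by auto
  have A1id: "A1 = mat 1 1 (\<lambda> _. e)"
    using splitA'[unfolded split_block_def Let_def] arg_cong[OF col0, of "\<lambda> v. v $ 0"] A' n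
    by (auto simp: col_def)
  have A1: "A1 \<in> carrier_mat 1 1" unfolding A1id by auto
  {
    fix i
    assume "i < ?n1"
    with arg_cong[OF col0, of "\<lambda> v. v $ Suc i"] A'
    have "A' $$ (Suc i, 0) = 0" by auto
  } note A'0 = this
  have A0id: "A0 = 0\<^sub>m ?n1 1"
    using splitA'[unfolded split_block_def Let_def] A'0 A' by auto
  have A0: "A0 \<in> carrier_mat ?n1 1" unfolding A0id by auto
  from cp char_poly_similar[OF A'A]
  have cp: "char_poly A' = [: -e,1 :] * (\<Prod> e \<leftarrow> es. [:- e, 1:])" by simp
  also have "char_poly A' = char_poly A1 * char_poly A3" 
    unfolding A'block A0id
    by (rule char_poly_four_block_zeros_col[OF A1 A2 A3])
  also have "char_poly A1 = [: -e,1 :]"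
    by (simp add: A1id char_poly_defs det_def sign_def)
  finally have cp: "char_poly A3 = (\<Prod> e \<leftarrow> es. [:- e, 1:])"
    by (metis mult_cancel_left pCons_eq_0_iff zero_neq_one)
  from Cons(1)[OF A3 cp] obtain U3 B where U3: "unitary_mat ?n1 U3" and B: "B \<in> carrier_mat ?n1 ?n1"
    and ut: "upper_triangular B" and diag: "diag_mat B = es" and A3eq: "A3 = U3 * B * mat_adjoint U3"
    by blast
  have U3c: "U3 \<in> carrier_mat ?n1 ?n1" and U3a: "U3 * mat_adjoint U3 = 1\<^sub>m ?n1" "mat_adjoint U3 * U3 = 1\<^sub>m ?n1"
    using U3 unfolding unitary_mat_def by auto
  have simIH: "similar_mat_wit A3 B U3 (mat_adjoint U3)"
    unfolding similar_mat_wit_def Let_def using A3 B U3c U3a A3eq by auto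
  let ?P' = "four_block_mat (1\<^sub>m 1) (0\<^sub>m 1 ?n1) (0\<^sub>m ?n1 1) U3"
  let ?Q' = "four_block_mat (1\<^sub>m 1) (0\<^sub>m 1 ?n1) (0\<^sub>m ?n1 1) (mat_adjoint U3)"
  define C where "C = four_block_mat A1 (A2 * U3) A0 B"
  have A0_eq: "A0 = U3 * A0 * 1\<^sub>m 1" unfolding A0id using U3c by auto
  have A2eq: "A2 = A2 * U3 * mat_adjoint U3"
    using assoc_mult_mat[OF A2 U3c adj_carrier[OF U3c]] U3a(1) A2 by simp
  have simA'C: "similar_mat_wit A' C ?P' ?Q'" unfolding A'block C_def
    by (rule similar_mat_wit_four_block[OF similar_mat_wit_refl[OF A1] simIH _ A0_eq A1 A3 A0],
    insert U3a A2 U3c A2eq, auto)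
  have ut1: "upper_triangular A1" unfolding A1id by auto
  have utC: "upper_triangular C" unfolding C_def A0id
    by (intro upper_triangular_four_block[OF _ B ut1 ut], auto simp: A1id)
  from A1id have diagA1: "diag_mat A1 = [e]" unfolding diag_mat_def by auto
  from diag_four_block_mat[OF A1 B] have diagC: "diag_mat C = e # es" unfolding diag diagA1 C_def by simp
  have simAC: "similar_mat_wit A C (W * ?P') (?Q' * W')"
    using similar_mat_wit_trans[OF simAA' simA'C] .
  have Q'adj: "?Q' = mat_adjoint ?P'"
    by (rule eq_matI) (use U3c in auto)
  have P'c: "?P' \<in> carrier_mat n n" using U3c n by auto
  have Qadj: "?Q' * W' = mat_adjoint (W * ?P')"
    unfolding Q'adj W'adj by (rule adj_mult[OF W P'c, symmetric])
  from similar_mat_witD2[OF A simAC] have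
    Cc: "C \<in> carrier_mat n n" and PQ: "(W * ?P') * (?Q' * W') = 1\<^sub>m n" "(?Q' * W') * (W * ?P') = 1\<^sub>m n"
    and AC: "A = (W * ?P') * C * (?Q' * W')" and Pc: "W * ?P' \<in> carrier_mat n n" by auto
  show ?case
    apply (rule exI[of _ "W * ?P'"], rule exI[of _ C])
    using Cc PQ AC Pc utC diagC unfolding unitary_mat_def Qadj by auto
qed


definition dmat :: "nat \<Rightarrow> (nat \<Rightarrow> complex) \<Rightarrow> complex mat" where
  "dmat n e = mat n n (\<lambda>(i,j). if i = j then e i else 0)"

lemma dmat_carrier[simp]: "dmat n e \<in> carrier_mat n n" "dim_row (dmat n e) = n" "dim_col (dmat n e) = n"
  unfolding dmat_def by auto

lemma dmat_index[simp]: "i < n \<Longrightarrow> j < n \<Longrightarrow> dmat n e $$ (i,j) = (if i = j then e i else 0)"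
  unfolding dmat_def by auto

lemma normal_ut_diag:
  fixes B :: "complex mat"
  assumes B: "B \<in> carrier_mat n n" and ut: "upper_triangular B"
    and nor: "B * mat_adjoint B = mat_adjoint B * B"
  shows "i < n \<Longrightarrow> j < n \<Longrightarrow> i \<noteq> j \<Longrightarrow> B $$ (i,j) = 0"
proof (induct i arbitrary: j rule: less_induct)
  case (less i)
  have low: "B $$ (k,i) = 0" if "k < n" "k \<noteq> i" for k
  proof (cases "k < i")
    case True
    then show ?thesis using less(1)[of k i] that less by auto
  next
    case False
    then have "i < k" using that by auto
    then show ?thesis using ut B that unfolding upper_triangular_def by auto
  qed
  have "(B * mat_adjoint B) $$ (i,i) = (mat_adjoint B * B) $$ (i,i)" using nor by simp
  moreover have "(B * mat_adjoint B) $$ (i,i) = (\<Sum>k<n. B $$ (i,k) * cnj (B $$ (i,k)))"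
    using B less by (subst mult_index') auto
  moreover have "(mat_adjoint B * B) $$ (i,i) = (\<Sum>k<n. cnj (B $$ (k,i)) * B $$ (k,i))"
    using B less by (subst mult_index') auto
  ultimately have "(\<Sum>k<n. B $$ (i,k) * cnj (B $$ (i,k))) = (\<Sum>k<n. B $$ (k,i) * cnj (B $$ (k,i)))"
    by (simp only: mult.commute)
  then have "(\<Sum>k<n. complex_of_real ((cmod (B $$ (i,k)))\<^sup>2)) = (\<Sum>k<n. complex_of_real ((cmod (B $$ (k,i)))\<^sup>2))"
    by (simp only: complex_norm_square)
  then have "complex_of_real (\<Sum>k<n. (cmod (B $$ (i,k)))\<^sup>2) = complex_of_real (\<Sum>k<n. (cmod (B $$ (k,i)))\<^sup>2)"
    unfolding of_real_sum .
  then have eq: "(\<Sum>k<n. (cmod (B $$ (i,k)))\<^sup>2) = (\<Sum>k<n. (cmod (B $$ (k,i)))\<^sup>2)"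
    using of_real_eq_iff by blast
  have fin: "finite {..<n}" by simp
  have iin: "i \<in> {..<n}" using less by simp
  have "(\<Sum>k<n. (cmod (B $$ (k,i)))\<^sup>2) = (cmod (B $$ (i,i)))\<^sup>2 + (\<Sum>k\<in>{..<n}-{i}. (cmod (B $$ (k,i)))\<^sup>2)"
    using sum.remove[OF fin iin] by blast
  also have "(\<Sum>k\<in>{..<n}-{i}. (cmod (B $$ (k,i)))\<^sup>2) = 0"
    using low by (intro sum.neutral) auto
  finally have r: "(\<Sum>k<n. (cmod (B $$ (k,i)))\<^sup>2) = (cmod (B $$ (i,i)))\<^sup>2" by simp
  have "(\<Sum>k<n. (cmod (B $$ (i,k)))\<^sup>2) = (cmod (B $$ (i,i)))\<^sup>2 + (\<Sum>k\<in>{..<n}-{i}. (cmod (B $$ (i,k)))\<^sup>2)"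
    using sum.remove[OF fin iin] by blast
  with eq r have "(\<Sum>k\<in>{..<n}-{i}. (cmod (B $$ (i,k)))\<^sup>2) = 0" by simp
  then have "\<forall>k\<in>{..<n}-{i}. (cmod (B $$ (i,k)))\<^sup>2 = 0"
    by (subst sum_nonneg_eq_0_iff[symmetric]) auto
  then show ?case using less by auto
qed

lemma unitary_cancel:
  assumes U: "unitary_mat n U" and X: "X \<in> carrier_mat n k"
  shows "mat_adjoint U * (U * X) = X" "U * (mat_adjoint U * X) = X"
proof -
  have Uc: "U \<in> carrier_mat n n" and Ua: "U * mat_adjoint U = 1\<^sub>m n" "mat_adjoint U * U = 1\<^sub>m n"
    using U unfolding unitary_mat_def by auto
  have Uac: "mat_adjoint U \<in> carrier_mat n n" using Uc by simp
  show "mat_adjoint U * (U * X) = X"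
    using assoc_mult_mat[OF Uac Uc X] Ua X by simp
  show "U * (mat_adjoint U * X) = X"
    using assoc_mult_mat[OF Uc Uac X] Ua X by simp
qed

lemma spectral:
  fixes A :: "complex mat"
  assumes A: "A \<in> carrier_mat n n" and nor: "A * mat_adjoint A = mat_adjoint A * A"
    and cp: "char_poly A = (\<Prod>i<n. [:- e i, 1:])"
  shows "\<exists>U. unitary_mat n U \<and> A = U * dmat n e * mat_adjoint U"
proof -
  have "(\<Prod>i<n. [:- e i, 1:]) = (\<Prod>x\<leftarrow>map e [0..<n]. [:- x, 1:])"
    by (simp add: prod.list_conv_set_nth lessThan_atLeast0)
  then obtain U B where U: "unitary_mat n U" and Bc: "B \<in> carrier_mat n n" and ut: "upper_triangular B"
    and dg: "diag_mat B = map e [0..<n]" and AB: "A = U * B * mat_adjoint U"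
    using unitary_schur[OF A] cp by metis
  have Uc: "U \<in> carrier_mat n n" and Ua: "U * mat_adjoint U = 1\<^sub>m n" "mat_adjoint U * U = 1\<^sub>m n"
    using U unfolding unitary_mat_def by auto
  have Uac: "mat_adjoint U \<in> carrier_mat n n" using Uc by simp
  have BA: "B = mat_adjoint U * A * U"
  proof -
    have "mat_adjoint U * A * U = mat_adjoint U * (U * (B * (mat_adjoint U * U)))"
      unfolding AB using Uc Uac Bc by (simp add: assoc_mult_mat[of _ n n _ n _ n] mult_carrier_mat[of _ n n _ n])
    also have "\<dots> = B" using Ua Bc unitary_cancel(1)[OF U Bc] by simp
    finally show ?thesis by simp
  qed
  have Bad: "mat_adjoint B = mat_adjoint U * (mat_adjoint A * U)"
  proof -
    have "mat_adjoint B = mat_adjoint U * mat_adjoint (mat_adjoint U * A)"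
      unfolding BA using adj_mult[of "mat_adjoint U * A" n n U n] Uac A Uc by (simp del: assoc_mult_mat)
    also have "\<dots> = mat_adjoint U * (mat_adjoint A * U)" using adj_mult[OF Uac A] by simp
    finally show ?thesis .
  qed
  have Aac: "mat_adjoint A \<in> carrier_mat n n" using A by simp
  have AAU: "A * (mat_adjoint A * U) = mat_adjoint A * (A * U)"
    using nor assoc_mult_mat[OF A Aac Uc] assoc_mult_mat[OF Aac A Uc] by simp
  have norB: "B * mat_adjoint B = mat_adjoint B * B"
  proof -
    have "B * mat_adjoint B = (mat_adjoint U * A * U) * (mat_adjoint U * (mat_adjoint A * U))"
      by (subst Bad, subst BA, rule refl)
    also have "\<dots> = mat_adjoint U * (A * (U * (mat_adjoint U * (mat_adjoint A * U))))"
      using Uc Uac A Aac by (simp add: assoc_mult_mat[of _ n n _ n _ n] mult_carrier_mat[of _ n n _ n])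
    also have "\<dots> = mat_adjoint U * (A * (mat_adjoint A * U))"
      using unitary_cancel(2)[OF U, of "mat_adjoint A * U" n] Aac Uc by simp
    also have "\<dots> = mat_adjoint U * (mat_adjoint A * (A * U))" using AAU by simp
    also have "\<dots> = mat_adjoint U * (mat_adjoint A * (U * (mat_adjoint U * (A * U))))"
      using unitary_cancel(2)[OF U, of "A * U" n] A Uc by simp
    also have "\<dots> = (mat_adjoint U * (mat_adjoint A * U)) * (mat_adjoint U * A * U)"
      using Uc Uac A Aac by (simp add: assoc_mult_mat[of _ n n _ n _ n] mult_carrier_mat[of _ n n _ n])
    also have "\<dots> = mat_adjoint B * B"
      by (subst Bad, subst BA, rule refl)
    finally show ?thesis .
  qed
  have "B = dmat n e"
  proof (rule eq_matI)
    fix i j assume ij: "i < dim_row (dmat n e)" "j < dim_col (dmat n e)"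
    show "B $$ (i,j) = dmat n e $$ (i,j)"
    proof (cases "i = j")
      case True
      have "diag_mat B ! i = e i" using dg ij by simp
      then show ?thesis using True ij Bc by (simp add: diag_mat_def)
    next
      case False
      then show ?thesis using normal_ut_diag[OF Bc ut norB] ij by simp
    qed
  qed (use Bc in auto)
  then show ?thesis using U AB by blast
qed


lemma sum_split_prod: fixes m n :: nat shows "(\<Sum>i<m*n. f i) = (\<Sum>a<m. \<Sum>b<n. f (a*n+b))"
proof -
  have "(\<Sum>i<m*n. f i) = (\<Sum>a<m. sum f {a*n..<a*n+n})"
    using sum.nat_group[of f n m] by simp
  also have "\<dots> = (\<Sum>a<m. \<Sum>b<n. f (a*n+b))"
  proof (rule sum.cong[OF refl])
    fix a
    show "sum f {a*n..<a*n+n} = (\<Sum>b<n. f (a*n+b))"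
      using sum.shift_bounds_nat_ivl[of f 0 "a*n" n] by (simp add: lessThan_atLeast0 add.commute)
  qed
  finally show ?thesis .
qed

lemma tensor_index: assumes "a < dA" "a' < dA" "b < dB" "b' < dB"
  shows "tensor_id dA dB W $$ (a*dB+b, a'*dB+b') = (if b = b' then W $$ (a,a') else 0)"
proof -
  have l0: "x*dB+y < dA*dB" if "x < dA" "y < dB" for x y
  proof -
    have "x*dB+y < (x+1)*dB" using that by simp
    also have "(x+1)*dB \<le> dA*dB" using that by (intro mult_le_mono1) simp
    finally show ?thesis .
  qed
  have l1: "a*dB+b < dA*dB" "a'*dB+b' < dA*dB" using assms l0 by auto
  show ?thesis unfolding tensor_id_def using l1 assms by auto
qed

lemma expect_formula:
  assumes psi: "psi \<in> carrier_vec (dA*dB)"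
  shows "expect psi (tensor_id dA dB W) =
    (\<Sum>a<dA. \<Sum>a'<dA. W $$ (a,a') * reduced_state dA dB psi $$ (a',a))"
proof -
  let ?X = "tensor_id dA dB W"
  let ?N = "dA*dB"
  have dX: "dim_row ?X = ?N" "dim_col ?X = ?N" unfolding tensor_id_def by auto
  have dpsi: "dim_vec psi = ?N" using psi by auto
  have mv: "(?X *\<^sub>v psi) $ i = (\<Sum>j<?N. ?X $$ (i,j) * psi $ j)" if "i < ?N" for i
    using that dX dpsi by (auto simp: scalar_prod_def lessThan_atLeast0 intro!: sum.cong)
  have inner: "(\<Sum>a'<dA. \<Sum>b'<dB. ?X $$ (a*dB+b, a'*dB+b') * psi $ (a'*dB+b')) = (\<Sum>a'<dA. W $$ (a,a') * psi $ (a'*dB+b))"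
    if ab: "a \<in> {..<dA}" "b \<in> {..<dB}" for a b
    proof (rule sum.cong[OF refl])
      fix a' assume a': "a' \<in> {..<dA}"
      have "(\<Sum>b'<dB. ?X $$ (a*dB+b, a'*dB+b') * psi $ (a'*dB+b')) =
          (\<Sum>b'<dB. if b = b' then W $$ (a,a') * psi $ (a'*dB+b') else 0)"
        using ab a' by (intro sum.cong refl) (auto simp: tensor_index)
      also have "\<dots> = W $$ (a,a') * psi $ (a'*dB+b)" using ab by (simp add: sum.delta)
      finally show "(\<Sum>b'<dB. ?X $$ (a*dB+b, a'*dB+b') * psi $ (a'*dB+b')) = W $$ (a,a') * psi $ (a'*dB+b)" .
    qed
  have "expect psi ?X = (\<Sum>i<?N. cnj (psi $ i) * (\<Sum>j<?N. ?X $$ (i,j) * psi $ j))"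
    unfolding expect_def dpsi using mv by (intro sum.cong) auto
  also have "\<dots> = (\<Sum>a<dA. \<Sum>b<dB. cnj (psi $ (a*dB+b)) *
      (\<Sum>a'<dA. \<Sum>b'<dB. ?X $$ (a*dB+b, a'*dB+b') * psi $ (a'*dB+b')))"
    by (simp only: sum_split_prod)
  also have "\<dots> = (\<Sum>a<dA. \<Sum>b<dB. cnj (psi $ (a*dB+b)) *
      (\<Sum>a'<dA. W $$ (a,a') * psi $ (a'*dB+b)))"
    using inner by (intro sum.cong refl) auto
  also have "\<dots> = (\<Sum>a<dA. \<Sum>b<dB. \<Sum>a'<dA. W $$ (a,a') * (psi $ (a'*dB+b) * cnj (psi $ (a*dB+b))))"
    by (simp add: sum_distrib_left mult_ac)
  also have "\<dots> = (\<Sum>a<dA. \<Sum>a'<dA. \<Sum>b<dB. W $$ (a,a') * (psi $ (a'*dB+b) * cnj (psi $ (a*dB+b))))"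
    by (intro sum.cong refl sum.swap)
  also have "\<dots> = (\<Sum>a<dA. \<Sum>a'<dA. W $$ (a,a') * reduced_state dA dB psi $$ (a',a))"
    unfolding reduced_state_def by (intro sum.cong refl) (auto simp: sum_distrib_left)
  finally show ?thesis .
qed


lemma sort_perm: fixes f :: "nat \<Rightarrow> real"
  shows "\<exists>\<pi>. \<pi> permutes {..<n} \<and> (\<forall>i i'. i \<le> i' \<longrightarrow> i' < n \<longrightarrow> f (\<pi> i) \<le> f (\<pi> i'))"
proof -
  let ?ys = "map f [0..<n]"
  let ?xs = "sort ?ys"
  have "mset ?xs = mset ?ys" by simp
  then obtain \<pi> where pi: "\<pi> permutes {..<length ?ys}" "permute_list \<pi> ?ys = ?xs"
    by (rule mset_eq_permutation)
  have pi': "\<pi> permutes {..<n}" using pi by simp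
  have xi: "?xs ! i = f (\<pi> i)" if "i < n" for i
  proof -
    have "?xs ! i = permute_list \<pi> ?ys ! i" using pi by simp
    also have "\<dots> = ?ys ! (\<pi> i)" using permute_list_nth[OF pi(1)] that by simp
    also have "\<dots> = f (\<pi> i)" using permutes_in_image[OF pi' ] that by simp
    finally show ?thesis .
  qed
  have "sorted ?xs" by simp
  have lxs: "length ?xs = n" by simp
  have "f (\<pi> i) \<le> f (\<pi> i')" if "i \<le> i'" "i' < n" for i i'
  proof -
    have "?xs ! i \<le> ?xs ! i'" using sorted_nth_mono[OF \<open>sorted ?xs\<close> that(1)] that lxs by simp
    then show ?thesis using xi that by simp
  qed
  then have "\<forall>i i'. i \<le> i' \<longrightarrow> i' < n \<longrightarrow> f (\<pi> i) \<le> f (\<pi> i')" by blast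
  then show ?thesis using pi' by blast
qed

lemma abel_ineq:
  fixes p d :: "nat \<Rightarrow> real"
  assumes dec: "\<And>i i'. i \<le> i' \<Longrightarrow> i' < n \<Longrightarrow> p i' \<le> p i"
    and pre: "\<And>m. m \<le> n \<Longrightarrow> (\<Sum>i<m. d i) \<ge> 0"
    and n: "n \<ge> 1"
  shows "(\<Sum>i<n. p i * d i) \<ge> p (n-1) * (\<Sum>i<n. d i)"
  using assms
proof (induct n)
  case 0 then show ?case by simp
next
  case (Suc n)
  show ?case
  proof (cases "n = 0")
    case True then show ?thesis by simp
  next
    case False
    have IH: "(\<Sum>i<n. p i * d i) \<ge> p (n-1) * (\<Sum>i<n. d i)"
      using Suc(1)[OF Suc(2)] Suc(3) False by auto
    have D: "(\<Sum>i<n. d i) \<ge> 0" using Suc(3)[of n] by simp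
    have pp: "p n \<le> p (n-1)" using Suc(2)[of "n-1" n] False by simp
    have "p n * (\<Sum>i<n. d i) \<le> p (n-1) * (\<Sum>i<n. d i)" using D pp by (simp add: mult_right_mono)
    then show ?thesis using IH by (simp add: algebra_simps)
  qed
qed

lemma knap:
  fixes c q :: "nat \<Rightarrow> real" and t :: real
  assumes c01: "\<And>j. j < n \<Longrightarrow> 0 \<le> c j \<and> c j \<le> 1"
    and csum: "(\<Sum>j<n. c j) = real m" and mn: "m \<le> n"
    and lo: "\<And>j. j < m \<Longrightarrow> t \<le> q j" and hi: "\<And>j. m \<le> j \<Longrightarrow> j < n \<Longrightarrow> q j \<le> t"
  shows "(\<Sum>j<n. c j * q j) \<le> (\<Sum>j<m. q j)"
proof -
  have split: "(\<Sum>j<n. g j) = (\<Sum>j<m. g j) + (\<Sum>j\<in>{m..<n}. g j)" for g :: "nat \<Rightarrow> real"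
    using mn by (metis atLeast0LessThan sum.atLeastLessThan_concat zero_le)
  have a: "(\<Sum>j<m. c j * q j - q j) \<le> (\<Sum>j<m. (c j - 1) * t)"
  proof (intro sum_mono)
    fix j assume "j \<in> {..<m}"
    then have "c j - 1 \<le> 0" "q j - t \<ge> 0" using c01 lo mn by auto
    then have "(c j - 1) * (q j - t) \<le> 0" by (rule mult_nonpos_nonneg)
    then show "c j * q j - q j \<le> (c j - 1) * t" by (simp add: algebra_simps)
  qed
  have b: "(\<Sum>j\<in>{m..<n}. c j * q j) \<le> (\<Sum>j\<in>{m..<n}. c j * t)"
    using c01 hi by (intro sum_mono) (auto intro!: mult_left_mono)
  have "(\<Sum>j<m. (c j - 1) * t) + (\<Sum>j\<in>{m..<n}. c j * t) = ((\<Sum>j<n. c j) - real m) * t"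
  proof -
    have "(\<Sum>j<m. (c j - 1) * t) = (\<Sum>j<m. c j * t - t)"
      by (simp add: left_diff_distrib)
    also have "\<dots> = (\<Sum>j<m. c j * t) - (\<Sum>j<m. t)" by (rule sum_subtractf)
    also have "\<dots> = (\<Sum>j<m. c j) * t - real m * t" by (simp add: sum_distrib_right)
    finally have 1: "(\<Sum>j<m. (c j - 1) * t) = (\<Sum>j<m. c j) * t - real m * t" .
    have 2: "(\<Sum>j\<in>{m..<n}. c j * t) = (\<Sum>j\<in>{m..<n}. c j) * t"
      by (simp add: sum_distrib_right)
    show ?thesis unfolding 1 2 split[of c] by (simp add: left_diff_distrib distrib_right)
  qed
  also have "\<dots> = 0" using csum by simp
  finally have z: "(\<Sum>j<m. (c j - 1) * t) + (\<Sum>j\<in>{m..<n}. c j * t) = 0" .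
  have "(\<Sum>j<n. c j * q j) - (\<Sum>j<m. q j) = (\<Sum>j<m. c j * q j - q j) + (\<Sum>j\<in>{m..<n}. c j * q j)"
    using split[of "\<lambda>j. c j * q j"] by (simp add: sum_subtractf)
  also have "\<dots> \<le> 0" using a b z by linarith
  finally show ?thesis by simp
qed


lemma sorted_case:
  fixes B :: "nat \<Rightarrow> nat \<Rightarrow> real" and p q :: "nat \<Rightarrow> real"
  assumes nn: "\<And>j i. j < n \<Longrightarrow> i < n \<Longrightarrow> B j i \<ge> 0"
    and rows: "\<And>j. j < n \<Longrightarrow> (\<Sum>i<n. B j i) = 1"
    and cols: "\<And>i. i < n \<Longrightarrow> (\<Sum>j<n. B j i) = 1"
    and pd: "\<And>i i'. i \<le> i' \<Longrightarrow> i' < n \<Longrightarrow> p i' \<le> p i"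
    and qd: "\<And>i i'. i \<le> i' \<Longrightarrow> i' < n \<Longrightarrow> q i' \<le> q i"
  shows "(\<Sum>j<n. \<Sum>i<n. B j i * q j * p i) \<le> (\<Sum>k<n. q k * p k)"
proof (cases "n = 0")
  case True then show ?thesis by simp
next
  case False
  then have n1: "n \<ge> 1" by simp
  define x where "x i = (\<Sum>j<n. B j i * q j)" for i
  define d where "d i = q i - x i" for i
  have lhs: "(\<Sum>j<n. \<Sum>i<n. B j i * q j * p i) = (\<Sum>i<n. p i * x i)"
    unfolding x_def by (subst sum.swap) (simp add: sum_distrib_left mult_ac)
  have pre: "(\<Sum>i<m. x i) \<le> (\<Sum>i<m. q i)" if m: "m \<le> n" for m
  proof -
    define c where "c j = (\<Sum>i<m. B j i)" for j
    have sx: "(\<Sum>i<m. x i) = (\<Sum>j<n. c j * q j)"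
      unfolding x_def c_def by (subst sum.swap) (simp add: sum_distrib_right)
    have c01: "0 \<le> c j \<and> c j \<le> 1" if j: "j < n" for j
    proof
      show "0 \<le> c j" unfolding c_def using nn j m by (intro sum_nonneg) auto
      have "c j \<le> (\<Sum>i<n. B j i)" unfolding c_def
        using nn j m by (intro sum_mono2) auto
      then show "c j \<le> 1" using rows[OF j] by simp
    qed
    have csum: "(\<Sum>j<n. c j) = real m"
    proof -
      have "(\<Sum>j<n. c j) = (\<Sum>i<m. \<Sum>j<n. B j i)" unfolding c_def by (rule sum.swap)
      also have "\<dots> = (\<Sum>i<m. 1)" using cols m by (intro sum.cong) auto
      finally show ?thesis by simp
    qed
    define t where "t = (if m < n then q m else q (n-1))"
    have lo: "t \<le> q j" if "j < m" for j
      using that m qd[of j m] qd[of j "n-1"] unfolding t_def by auto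
    have hi: "q j \<le> t" if "m \<le> j" "j < n" for j
      using that m qd[of m j] unfolding t_def by auto
    show ?thesis unfolding sx using knap[OF c01 csum m lo hi] by simp
  qed
  have tot: "(\<Sum>i<n. x i) = (\<Sum>i<n. q i)"
  proof -
    have "(\<Sum>i<n. x i) = (\<Sum>j<n. q j * (\<Sum>i<n. B j i))"
      unfolding x_def by (subst sum.swap) (simp add: sum_distrib_left mult_ac)
    also have "\<dots> = (\<Sum>j<n. q j)" using rows by (intro sum.cong) auto
    finally show ?thesis .
  qed
  have dpre: "(\<Sum>i<m. d i) \<ge> 0" if "m \<le> n" for m
    using pre[OF that] unfolding d_def by (simp add: sum_subtractf)
  have dtot: "(\<Sum>i<n. d i) = 0" using tot unfolding d_def by (simp add: sum_subtractf)
  have "(\<Sum>i<n. p i * d i) \<ge> 0" using abel_ineq[of n p d, OF pd dpre n1] dtot by simp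
  then have "(\<Sum>i<n. p i * x i) \<le> (\<Sum>i<n. p i * q i)"
    unfolding d_def by (simp add: right_diff_distrib sum_subtractf)
  then show ?thesis unfolding lhs by (simp add: mult.commute)
qed

lemma birkhoff_rank1:
  fixes B :: "nat \<Rightarrow> nat \<Rightarrow> real" and p q :: "nat \<Rightarrow> real"
  assumes nn: "\<And>j i. j < n \<Longrightarrow> i < n \<Longrightarrow> B j i \<ge> 0"
    and rows: "\<And>j. j < n \<Longrightarrow> (\<Sum>i<n. B j i) = 1"
    and cols: "\<And>i. i < n \<Longrightarrow> (\<Sum>j<n. B j i) = 1"
  shows "\<exists>\<sigma>. \<sigma> permutes {..<n} \<and> (\<Sum>j<n. \<Sum>i<n. B j i * q j * p i) \<le> (\<Sum>j<n. q j * p (\<sigma> j))"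
proof -
  obtain \<pi> where pi: "\<pi> permutes {..<n}" and pis: "\<And>i i'. i \<le> i' \<Longrightarrow> i' < n \<Longrightarrow> - p (\<pi> i) \<le> - p (\<pi> i')"
    using sort_perm[where f="\<lambda>i. - p i" and n=n] by blast
  obtain \<tau> where tau: "\<tau> permutes {..<n}" and taus: "\<And>i i'. i \<le> i' \<Longrightarrow> i' < n \<Longrightarrow> - q (\<tau> i) \<le> - q (\<tau> i')"
    using sort_perm[where f="\<lambda>i. - q i" and n=n] by blast
  have pin: "\<pi> i < n" if "i < n" for i using permutes_in_image[OF pi] that by simp
  have taun: "\<tau> i < n" if "i < n" for i using permutes_in_image[OF tau] that by simp
  define B' where "B' j i = B (\<tau> j) (\<pi> i)" for j i
  have nn': "B' j i \<ge> 0" if "j < n" "i < n" for j i unfolding B'_def using nn pin taun that by simp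
  have rows': "(\<Sum>i<n. B' j i) = 1" if "j < n" for j
  proof -
    have "(\<Sum>i<n. B' j i) = (\<Sum>i<n. B (\<tau> j) i)" unfolding B'_def
      using sum.permute[OF pi, of "B (\<tau> j)"] by (simp add: comp_def)
    then show ?thesis using rows taun that by simp
  qed
  have cols': "(\<Sum>j<n. B' j i) = 1" if "i < n" for i
  proof -
    have "(\<Sum>j<n. B' j i) = (\<Sum>j<n. B j (\<pi> i))" unfolding B'_def
      using sum.permute[OF tau, of "\<lambda>j. B j (\<pi> i)"] by (simp add: comp_def)
    then show ?thesis using cols pin that by simp
  qed
  have "(\<Sum>j<n. \<Sum>i<n. B j i * q j * p i) = (\<Sum>j<n. \<Sum>i<n. B (\<tau> j) i * q (\<tau> j) * p i)"
    using sum.permute[OF tau, of "\<lambda>j. \<Sum>i<n. B j i * q j * p i"] by (simp add: comp_def)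
  also have "\<dots> = (\<Sum>j<n. \<Sum>i<n. B' j i * q (\<tau> j) * p (\<pi> i))"
  proof (rule sum.cong[OF refl])
    fix j
    show "(\<Sum>i<n. B (\<tau> j) i * q (\<tau> j) * p i) = (\<Sum>i<n. B' j i * q (\<tau> j) * p (\<pi> i))"
      using sum.permute[OF pi, of "\<lambda>i. B (\<tau> j) i * q (\<tau> j) * p i"] unfolding B'_def by (simp add: comp_def)
  qed
  also have "\<dots> \<le> (\<Sum>k<n. q (\<tau> k) * p (\<pi> k))"
    by (rule sorted_case[OF nn' rows' cols']) (use pis taus in auto)
  also have "\<dots> = (\<Sum>j<n. q j * p ((\<pi> \<circ> inv_into UNIV \<tau>) j))"
    using sum.permute[OF tau, of "\<lambda>j. q j * p ((\<pi> \<circ> inv_into UNIV \<tau>) j)"]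
    by (simp add: comp_def permutes_inverses(2)[OF tau])
  finally show ?thesis using permutes_compose[OF permutes_inv[OF tau] pi] by blast
qed


lemma T_inv:
  fixes p :: "nat \<Rightarrow> real"
  assumes "\<tau> permutes {..<n}"
  shows "(\<Sum>\<sigma>\<in>{\<sigma>. \<sigma> permutes {..<n}}. p (\<sigma> i) * p (\<sigma> k)) =
         (\<Sum>\<sigma>\<in>{\<sigma>. \<sigma> permutes {..<n}}. p (\<sigma> (\<tau> i)) * p (\<sigma> (\<tau> k)))"
  using sum_permutations_compose_right[OF assms, of "\<lambda>\<sigma>. p (\<sigma> i) * p (\<sigma> k)"]
  by (simp add: comp_def)

lemma avg_perm:
  fixes p :: "nat \<Rightarrow> real" and lam :: "nat \<Rightarrow> complex"
  assumes n: "n \<ge> 2" and ps: "(\<Sum>i<n. p i) = 1" and ls: "(\<Sum>i<n. lam i) = 0"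
    and lu: "\<And>i. i < n \<Longrightarrow> cmod (lam i) = 1"
  shows "(\<Sum>\<sigma>\<in>{\<sigma>. \<sigma> permutes {..<n}}. (cmod (\<Sum>i<n. lam i * of_real (p (\<sigma> i))))\<^sup>2) =
     fact n * ((\<Sum>i<n. (p i)\<^sup>2) - (1 - (\<Sum>i<n. (p i)\<^sup>2)) / (real n - 1))"
proof -
  let ?P = "{\<sigma>. \<sigma> permutes {..<n}}"
  define T where "T i k = (\<Sum>\<sigma>\<in>?P. p (\<sigma> i) * p (\<sigma> k))" for i k
  have finP: "finite ?P" by (rule finite_permutations) simp
  have cardP: "card ?P = fact n" by (rule card_permutations) auto
  have Tinv: "T i k = T (\<tau> i) (\<tau> k)" if "\<tau> permutes {..<n}" for \<tau> i k
    unfolding T_def using T_inv[OF that] .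
  have Tdiag: "T i i = T 0 0" if "i < n" for i
  proof -
    have "transpose 0 i permutes {..<n}" using that n by (intro permutes_swap_id) auto
    from Tinv[OF this, of 0 0] show ?thesis by simp
  qed
  have Toff: "T i k = T 0 1" if "i < n" "k < n" "i \<noteq> k" for i k
  proof -
    define t1 where "t1 = transpose 0 i"
    define t2 where "t2 = transpose (t1 1) k"
    have t1p: "t1 permutes {..<n}" unfolding t1_def using that n by (intro permutes_swap_id) auto
    have t11: "t1 1 = (if i = 1 then 0 else 1)" unfolding t1_def transpose_def by simp
    have t11n: "t1 1 < n" using t11 n by auto
    have t2p: "t2 permutes {..<n}" unfolding t2_def using that t11n by (intro permutes_swap_id) auto
    have "t1 0 = i" unfolding t1_def by simp
    moreover have "t1 1 \<noteq> i" using t11 by auto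
    ultimately have "(t2 \<circ> t1) 0 = i" using that unfolding t2_def transpose_def by simp
    moreover have "(t2 \<circ> t1) 1 = k" unfolding t2_def by simp
    ultimately show ?thesis using Tinv[OF permutes_compose[OF t1p t2p], of 0 1] by simp
  qed
  define a where "a = T 0 0"
  define b where "b = T 0 1"
  have Tab: "T i k = b + (if i = k then a - b else 0)" if "i < n" "k < n" for i k
  proof (cases "i = k")
    case True
    have "T i i = T 0 0" using Tdiag[OF that(1)] .
    then show ?thesis using True unfolding a_def b_def by simp
  next
    case False
    have "T i k = T 0 1" using Toff[OF that False] .
    then show ?thesis using False unfolding a_def b_def by simp
  qed
  define s where "s = (\<Sum>i<n. (p i)\<^sup>2)"
  have D: "(\<Sum>i<n. T i i) = fact n * s"
  proof -
    have "(\<Sum>i<n. T i i) = (\<Sum>\<sigma>\<in>?P. \<Sum>i<n. (p (\<sigma> i))\<^sup>2)"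
      unfolding T_def by (subst sum.swap) (simp add: power2_eq_square)
    also have "\<dots> = (\<Sum>\<sigma>\<in>?P. s)"
    proof (rule sum.cong[OF refl])
      fix \<sigma> assume "\<sigma> \<in> ?P"
      then have "\<sigma> permutes {..<n}" by simp
      from sum.permute[OF this, of "\<lambda>i. (p i)\<^sup>2"] show "(\<Sum>i<n. (p (\<sigma> i))\<^sup>2) = s"
        unfolding s_def by (simp add: comp_def)
    qed
    finally show ?thesis using cardP by simp
  qed
  have F: "(\<Sum>i<n. \<Sum>k<n. T i k) = fact n"
  proof -
    have "(\<Sum>i<n. \<Sum>k<n. T i k) = (\<Sum>\<sigma>\<in>?P. (\<Sum>i<n. p (\<sigma> i)) * (\<Sum>k<n. p (\<sigma> k)))"
      unfolding T_def by (simp add: sum.swap[of _ ?P] sum_product)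
    also have "\<dots> = (\<Sum>\<sigma>\<in>?P. 1)"
    proof (rule sum.cong[OF refl])
      fix \<sigma> assume "\<sigma> \<in> ?P"
      then have "\<sigma> permutes {..<n}" by simp
      from sum.permute[OF this, of p] ps show "(\<Sum>i<n. p (\<sigma> i)) * (\<Sum>k<n. p (\<sigma> k)) = 1"
        by (simp add: comp_def)
    qed
    finally show ?thesis using cardP by simp
  qed
  have Da: "(\<Sum>i<n. T i i) = real n * a"
  proof -
    have "(\<Sum>i<n. T i i) = (\<Sum>i<n. a)" using Tab by (intro sum.cong) auto
    then show ?thesis by simp
  qed
  have Fab: "(\<Sum>i<n. \<Sum>k<n. T i k) = real n * real n * b + real n * (a - b)"
  proof -
    have "(\<Sum>i<n. \<Sum>k<n. T i k) = (\<Sum>i<n. \<Sum>k<n. b + (if i = k then a - b else 0))"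
      using Tab by (intro sum.cong refl) auto
    also have "\<dots> = (\<Sum>i<n. real n * b + (a - b))"
      by (intro sum.cong refl) (simp add: sum.distrib)
    finally show ?thesis by (simp add: algebra_simps)
  qed
  define c where "c i k = lam i * cnj (lam k)" for i k
  have sq: "complex_of_real ((cmod (\<Sum>i<n. lam i * of_real (p (\<sigma> i))))\<^sup>2) =
      (\<Sum>i<n. \<Sum>k<n. c i k * of_real (p (\<sigma> i) * p (\<sigma> k)))" for \<sigma>
  proof -
    have "complex_of_real ((cmod (\<Sum>i<n. lam i * of_real (p (\<sigma> i))))\<^sup>2) =
        (\<Sum>i<n. lam i * of_real (p (\<sigma> i))) * cnj (\<Sum>k<n. lam k * of_real (p (\<sigma> k)))"
      by (rule complex_norm_square)
    also have "\<dots> = (\<Sum>i<n. \<Sum>k<n. c i k * of_real (p (\<sigma> i) * p (\<sigma> k)))"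
      unfolding c_def by (simp add: sum_product cnj_sum mult_ac)
    finally show ?thesis .
  qed
  have "complex_of_real (\<Sum>\<sigma>\<in>?P. (cmod (\<Sum>i<n. lam i * of_real (p (\<sigma> i))))\<^sup>2) =
      (\<Sum>\<sigma>\<in>?P. \<Sum>i<n. \<Sum>k<n. c i k * of_real (p (\<sigma> i) * p (\<sigma> k)))"
    unfolding of_real_sum sq ..
  also have "\<dots> = (\<Sum>i<n. \<Sum>k<n. c i k * of_real (T i k))"
    unfolding T_def of_real_sum by (simp add: sum.swap[of _ ?P] sum_distrib_left)
  also have "\<dots> = (\<Sum>i<n. \<Sum>k<n. c i k * of_real b) + (\<Sum>i<n. c i i * of_real (a - b))"
  proof -
    have "(\<Sum>i<n. \<Sum>k<n. c i k * of_real (T i k)) =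
        (\<Sum>i<n. \<Sum>k<n. c i k * of_real b + (if i = k then c i k * of_real (a - b) else 0))"
      using Tab by (intro sum.cong refl) (auto simp: distrib_left)
    also have "\<dots> = (\<Sum>i<n. (\<Sum>k<n. c i k * of_real b) + c i i * of_real (a - b))"
      by (intro sum.cong refl) (simp add: sum.distrib)
    finally show ?thesis by (simp add: sum.distrib)
  qed
  also have "(\<Sum>i<n. \<Sum>k<n. c i k * of_real b) = 0"
  proof -
    have "(\<Sum>i<n. \<Sum>k<n. c i k * of_real b) = ((\<Sum>i<n. lam i) * cnj (\<Sum>k<n. lam k)) * of_real b"
      unfolding c_def sum_distrib_right[symmetric] by (simp add: sum_product cnj_sum)
    then show ?thesis using ls by simp
  qed
  also have "(\<Sum>i<n. c i i * of_real (a - b)) = of_real (real n * (a - b))"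
  proof -
    have "c i i = 1" if "i < n" for i
    proof -
      have "c i i = complex_of_real ((cmod (lam i))\<^sup>2)" unfolding c_def by (rule complex_norm_square[symmetric])
      also have "\<dots> = 1" using lu[OF that] by simp
      finally show ?thesis .
    qed
    then have "(\<Sum>i<n. c i i * of_real (a - b)) = (\<Sum>i<n. of_real (a - b))" by (intro sum.cong) auto
    then show ?thesis by simp
  qed
  finally have "complex_of_real (\<Sum>\<sigma>\<in>?P. (cmod (\<Sum>i<n. lam i * of_real (p (\<sigma> i))))\<^sup>2) = complex_of_real (real n * (a - b))"
    by (simp only: add_0)
  then have main: "(\<Sum>\<sigma>\<in>?P. (cmod (\<Sum>i<n. lam i * of_real (p (\<sigma> i))))\<^sup>2) = real n * (a - b)"
    by (simp only: of_real_eq_iff)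
  have n1: "real n - 1 > 0" using n by simp
  have e1: "real n * a = fact n * s" using D Da by simp
  have e2: "real n * real n * b + real n * (a - b) = fact n" using F Fab by simp
  have "real n * b * (real n - 1) = fact n - fact n * s" using e1 e2 by (simp add: algebra_simps)
  then have "real n * b = (fact n - fact n * s) / (real n - 1)" using n1 by (simp add: field_simps)
  then have "real n * (a - b) = fact n * s - (fact n - fact n * s) / (real n - 1)"
    using e1 by (simp add: algebra_simps)
  also have "\<dots> = fact n * (s - (1 - s) / (real n - 1))" by (simp add: algebra_simps diff_divide_distrib)
  finally show ?thesis unfolding main s_def .
qed


lemma unitary_carrier: "unitary_mat n A \<Longrightarrow> A \<in> carrier_mat n n"
  unfolding unitary_mat_def by auto

lemma unitary_adj: assumes "unitary_mat n A" shows "unitary_mat n (mat_adjoint A)"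
  using assms unfolding unitary_mat_def by auto

lemma unitary_mult: assumes A: "unitary_mat n A" and B: "unitary_mat n B" shows "unitary_mat n (A * B)"
proof -
  have Ac: "A \<in> carrier_mat n n" and Bc: "B \<in> carrier_mat n n" using A B unitary_carrier by auto
  have Aac: "mat_adjoint A \<in> carrier_mat n n" and Bac: "mat_adjoint B \<in> carrier_mat n n" using Ac Bc by auto
  have adj: "mat_adjoint (A * B) = mat_adjoint B * mat_adjoint A" by (rule adj_mult[OF Ac Bc])
  have 1: "A * B * mat_adjoint (A * B) = 1\<^sub>m n"
  proof -
    have "A * B * mat_adjoint (A * B) = A * (B * (mat_adjoint B * mat_adjoint A))"
      unfolding adj using Ac Bc Aac Bac by (simp add: assoc_mult_mat[of _ n n _ n _ n] mult_carrier_mat[of _ n n _ n])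
    also have "\<dots> = A * mat_adjoint A" using unitary_cancel(2)[OF B Aac] by simp
    also have "\<dots> = 1\<^sub>m n" using A unfolding unitary_mat_def by simp
    finally show ?thesis .
  qed
  have 2: "mat_adjoint (A * B) * (A * B) = 1\<^sub>m n"
  proof -
    have "mat_adjoint (A * B) * (A * B) = mat_adjoint B * (mat_adjoint A * (A * B))"
      unfolding adj using Ac Bc Aac Bac by (simp add: assoc_mult_mat[of _ n n _ n _ n] mult_carrier_mat[of _ n n _ n])
    also have "\<dots> = mat_adjoint B * B" using unitary_cancel(1)[OF A Bc] by simp
    also have "\<dots> = 1\<^sub>m n" using B unfolding unitary_mat_def by simp
    finally show ?thesis .
  qed
  show ?thesis unfolding unitary_mat_def using 1 2 Ac Bc by auto
qed

lemma dmat_unitary: assumes "\<And>i. i < n \<Longrightarrow> cmod (e i) = 1" shows "unitary_mat n (dmat n e)"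
proof -
  have ee: "e i * cnj (e i) = 1" "cnj (e i) * e i = 1" if "i < n" for i
  proof -
    have "e i * cnj (e i) = complex_of_real ((cmod (e i))\<^sup>2)" by (rule complex_norm_square[symmetric])
    also have "\<dots> = 1" using assms[OF that] by simp
    finally show "e i * cnj (e i) = 1" .
    then show "cnj (e i) * e i = 1" by (simp add: mult.commute)
  qed
  have 1: "dmat n e * mat_adjoint (dmat n e) = 1\<^sub>m n"
  proof (rule eq_matI)
    fix i j assume ij: "i < dim_row (1\<^sub>m n)" "j < dim_col (1\<^sub>m n)"
    then have ij': "i < n" "j < n" by auto
    have "(dmat n e * mat_adjoint (dmat n e)) $$ (i,j) = (\<Sum>k<n. dmat n e $$ (i,k) * mat_adjoint (dmat n e) $$ (k,j))"
      using ij' by (subst mult_index') auto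
    also have "\<dots> = (\<Sum>k<n. if k = i then (if i = j then e i * cnj (e i) else 0) else 0)"
      using ij' by (intro sum.cong refl) auto
    also have "\<dots> = 1\<^sub>m n $$ (i,j)" using ij' ee by (simp add: sum.delta')
    finally show "(dmat n e * mat_adjoint (dmat n e)) $$ (i,j) = 1\<^sub>m n $$ (i,j)" .
  qed auto
  have 2: "mat_adjoint (dmat n e) * dmat n e = 1\<^sub>m n"
  proof (rule eq_matI)
    fix i j assume ij: "i < dim_row (1\<^sub>m n)" "j < dim_col (1\<^sub>m n)"
    then have ij': "i < n" "j < n" by auto
    have "(mat_adjoint (dmat n e) * dmat n e) $$ (i,j) = (\<Sum>k<n. mat_adjoint (dmat n e) $$ (i,k) * dmat n e $$ (k,j))"
      using ij' by (subst mult_index') auto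
    also have "\<dots> = (\<Sum>k<n. if k = i then (if i = j then cnj (e i) * e i else 0) else 0)"
      using ij' by (intro sum.cong refl) auto
    also have "\<dots> = 1\<^sub>m n $$ (i,j)" using ij' ee by (simp add: sum.delta')
    finally show "(mat_adjoint (dmat n e) * dmat n e) $$ (i,j) = 1\<^sub>m n $$ (i,j)" .
  qed auto
  show ?thesis unfolding unitary_mat_def using 1 2 by auto
qed

lemma udu_index:
  assumes A: "A \<in> carrier_mat n n" and ij: "a < n" "a' < n"
  shows "(A * dmat n e * mat_adjoint A) $$ (a,a') = (\<Sum>j<n. A $$ (a,j) * e j * cnj (A $$ (a',j)))"
proof -
  have AD: "(A * dmat n e) $$ (a,k) = A $$ (a,k) * e k" if "k < n" for k
  proof -
    have "(A * dmat n e) $$ (a,k) = (\<Sum>j<n. A $$ (a,j) * dmat n e $$ (j,k))"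
      using A ij that by (subst mult_index') auto
    also have "\<dots> = (\<Sum>j<n. if j = k then A $$ (a,j) * e k else 0)"
      using that by (intro sum.cong refl) auto
    also have "\<dots> = A $$ (a,k) * e k" using that by (simp add: sum.delta')
    finally show ?thesis .
  qed
  have "(A * dmat n e * mat_adjoint A) $$ (a,a') = (\<Sum>k<n. (A * dmat n e) $$ (a,k) * mat_adjoint A $$ (k,a'))"
    using A ij by (subst mult_index') auto
  also have "\<dots> = (\<Sum>j<n. A $$ (a,j) * e j * cnj (A $$ (a',j)))"
    using AD A ij by (intro sum.cong refl) auto
  finally show ?thesis .
qed

lemma unitary_rows:
  assumes X: "unitary_mat n X" and j: "j < n"
  shows "(\<Sum>i<n. (cmod (X $$ (j,i)))\<^sup>2) = 1" "(\<Sum>i<n. (cmod (X $$ (i,j)))\<^sup>2) = 1"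
proof -
  have Xc: "X \<in> carrier_mat n n" using X unitary_carrier by auto
  have "(X * mat_adjoint X) $$ (j,j) = 1" using X j unfolding unitary_mat_def by simp
  moreover have "(X * mat_adjoint X) $$ (j,j) = (\<Sum>i<n. X $$ (j,i) * cnj (X $$ (j,i)))"
    using Xc j by (subst mult_index') auto
  ultimately have "(\<Sum>i<n. X $$ (j,i) * cnj (X $$ (j,i))) = 1" by simp
  then have "(\<Sum>i<n. complex_of_real ((cmod (X $$ (j,i)))\<^sup>2)) = 1" by (simp only: complex_norm_square)
  then have "complex_of_real (\<Sum>i<n. (cmod (X $$ (j,i)))\<^sup>2) = 1" by (simp only: of_real_sum)
  then show "(\<Sum>i<n. (cmod (X $$ (j,i)))\<^sup>2) = 1" using of_real_eq_1_iff by blast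
  have "(mat_adjoint X * X) $$ (j,j) = 1" using X j unfolding unitary_mat_def by simp
  moreover have "(mat_adjoint X * X) $$ (j,j) = (\<Sum>i<n. cnj (X $$ (i,j)) * X $$ (i,j))"
    using Xc j by (subst mult_index') auto
  ultimately have "(\<Sum>i<n. X $$ (i,j) * cnj (X $$ (i,j))) = 1" by (simp add: mult.commute)
  then have "(\<Sum>i<n. complex_of_real ((cmod (X $$ (i,j)))\<^sup>2)) = 1" by (simp only: complex_norm_square)
  then have "complex_of_real (\<Sum>i<n. (cmod (X $$ (i,j)))\<^sup>2) = 1" by (simp only: of_real_sum)
  then show "(\<Sum>i<n. (cmod (X $$ (i,j)))\<^sup>2) = 1" using of_real_eq_1_iff by blast
qed

lemma quad_formula:
  assumes U: "U \<in> carrier_mat n n" and V: "V \<in> carrier_mat n n"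
  shows "(\<Sum>a<n. \<Sum>a'<n. (U * dmat n e * mat_adjoint U) $$ (a,a') * (V * dmat n f * mat_adjoint V) $$ (a',a))
    = (\<Sum>j<n. \<Sum>i<n. e j * f i * complex_of_real ((cmod ((mat_adjoint U * V) $$ (j,i)))\<^sup>2))"
proof -
  let ?X = "mat_adjoint U * V"
  have X: "?X $$ (j,i) = (\<Sum>a<n. cnj (U $$ (a,j)) * V $$ (a,i))" if "j < n" "i < n" for j i
    using U V that by (subst mult_index') auto
  define F where "F a a' j i = U $$ (a,j) * e j * cnj (U $$ (a',j)) * (V $$ (a',i) * f i * cnj (V $$ (a,i)))" for a a' j i
  have "(\<Sum>a<n. \<Sum>a'<n. (U * dmat n e * mat_adjoint U) $$ (a,a') * (V * dmat n f * mat_adjoint V) $$ (a',a))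
      = (\<Sum>a<n. \<Sum>a'<n. \<Sum>j<n. \<Sum>i<n. F a a' j i)"
    unfolding F_def by (intro sum.cong refl) (simp add: udu_index U V sum_product)
  also have "\<dots> = (\<Sum>a<n. \<Sum>j<n. \<Sum>a'<n. \<Sum>i<n. F a a' j i)"
    by (intro sum.cong refl sum.swap)
  also have "\<dots> = (\<Sum>j<n. \<Sum>a<n. \<Sum>a'<n. \<Sum>i<n. F a a' j i)"
    by (rule sum.swap)
  also have "\<dots> = (\<Sum>j<n. \<Sum>a<n. \<Sum>i<n. \<Sum>a'<n. F a a' j i)"
    by (intro sum.cong refl sum.swap)
  also have "\<dots> = (\<Sum>j<n. \<Sum>i<n. \<Sum>a<n. \<Sum>a'<n. F a a' j i)"
    by (intro sum.cong refl sum.swap)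
  also have "\<dots> = (\<Sum>j<n. \<Sum>i<n. e j * f i * (?X $$ (j,i) * cnj (?X $$ (j,i))))"
  proof (intro sum.cong refl)
    fix j i assume ji: "j \<in> {..<n}" "i \<in> {..<n}"
    have "?X $$ (j,i) * cnj (?X $$ (j,i)) = (\<Sum>a'<n. cnj (U $$ (a',j)) * V $$ (a',i)) * (\<Sum>a<n. U $$ (a,j) * cnj (V $$ (a,i)))"
      using X ji by (simp add: cnj_sum)
    also have "\<dots> = (\<Sum>a<n. \<Sum>a'<n. U $$ (a,j) * cnj (V $$ (a,i)) * (cnj (U $$ (a',j)) * V $$ (a',i)))"
      by (subst mult.commute) (simp add: sum_product)
    finally show "(\<Sum>a<n. \<Sum>a'<n. F a a' j i) = e j * f i * (?X $$ (j,i) * cnj (?X $$ (j,i)))"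
      unfolding F_def by (simp add: sum_distrib_left mult_ac)
  qed
  also have "\<dots> = (\<Sum>j<n. \<Sum>i<n. e j * f i * complex_of_real ((cmod (?X $$ (j,i)))\<^sup>2))"
    by (simp only: complex_norm_square)
  finally show ?thesis .
qed


lemma lam_norm[simp]: "cmod (stellar_lambda d i) = 1"
  unfolding stellar_lambda_def by simp

lemma lam_sum: assumes d: "d \<ge> 2" shows "(\<Sum>i<d. stellar_lambda d i) = 0"
proof -
  define z where "z = cis (- 2 * pi / real d)"
  define c where "c = cis ((real d - 1) * pi / real d)"
  have dpos: "real d > 0" using d by simp
  have lam: "stellar_lambda d i = c * z ^ i" for i
  proof -
    have "c * z ^ i = cis ((real d - 1) * pi / real d + real i * (- 2 * pi / real d))"
      unfolding c_def z_def DeMoivre cis_mult ..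
    also have "(real d - 1) * pi / real d + real i * (- 2 * pi / real d) = (real d - 2 * real (Suc i) + 1) * pi / real d"
      using dpos by (simp add: field_simps)
    finally show ?thesis unfolding stellar_lambda_def by simp
  qed
  have zd: "z ^ d = 1"
  proof -
    have "z ^ d = cis (real d * (- 2 * pi / real d))" unfolding z_def DeMoivre ..
    also have "real d * (- 2 * pi / real d) = - (2 * pi)" using dpos by simp
    finally show ?thesis by (simp add: cis_def complex_eq_iff)
  qed
  have z1: "z \<noteq> 1"
  proof
    assume "z = 1"
    then have "Re z = 1" by simp
    then have "cos (- 2 * pi / real d) = 1" unfolding z_def by simp
    then have "cos (2 * pi / real d) = 1" by (metis cos_minus minus_divide_left mult_minus_left)
    moreover have "cos (2 * pi / real d) < cos 0"
    proof (rule cos_monotone_0_pi)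
      show "0 < 2 * pi / real d" using dpos by simp
      show "2 * pi / real d \<le> pi" using d by (simp add: field_simps)
    qed simp
    ultimately show False by simp
  qed
  have "(\<Sum>i<d. stellar_lambda d i) = c * (\<Sum>i<d. z ^ i)" by (simp add: lam sum_distrib_left)
  also have "(\<Sum>i<d. z ^ i) = 0" using geometric_sum[OF z1, of d] zd by simp
  finally show ?thesis by simp
qed

lemma sum2: "(\<Sum>i<2. f i) = f 0 + f (1::nat)" by (simp add: numeral_2_eq_2)
lemma sum3: "(\<Sum>i<3. f i) = f 0 + f 1 + f (2::nat)" by (simp add: numeral_3_eq_3 numeral_2_eq_2)

lemma lam2: "stellar_lambda 2 0 = \<i>" "stellar_lambda 2 1 = - \<i>"
  unfolding stellar_lambda_def by (simp_all add: complex_eq_iff)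

lemma lam3: "stellar_lambda 3 0 = Complex (-1/2) (sqrt 3 / 2)" "stellar_lambda 3 1 = 1"
  "stellar_lambda 3 2 = Complex (-1/2) (- sqrt 3 / 2)"
proof -
  show "stellar_lambda 3 0 = Complex (-1/2) (sqrt 3 / 2)"
    unfolding stellar_lambda_def by (simp add: complex_eq_iff cos_120 sin_120)
  show "stellar_lambda 3 1 = 1" unfolding stellar_lambda_def by (simp add: complex_eq_iff)
  have "(3 - 2 * real (Suc 2) + 1) * pi / 3 = - (2 * pi / 3)" by simp
  then show "stellar_lambda 3 2 = Complex (-1/2) (- sqrt 3 / 2)"
    unfolding stellar_lambda_def by (simp add: complex_eq_iff cos_120 sin_120)
qed

lemma S2:
  shows "(cmod (\<Sum>i<2. stellar_lambda 2 i * of_real (g i)))\<^sup>2 = 2 * ((g 0)\<^sup>2 + (g 1)\<^sup>2) - (g 0 + g 1)\<^sup>2"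
  unfolding sum2 lam2 cmod_power2 by (simp add: power2_eq_square algebra_simps)

lemma S3: shows "(cmod (\<Sum>i<3. stellar_lambda 3 i * of_real (g i)))\<^sup>2 =
   (3 * ((g 0)\<^sup>2 + (g 1)\<^sup>2 + (g 2)\<^sup>2) - (g 0 + g 1 + g 2)\<^sup>2) / 2"
proof -
  have s3: "sqrt 3 * sqrt 3 = (3::real)" "sqrt 3 * (sqrt 3 * x) = 3 * (x::real)" for x
    by (simp_all add: mult.assoc[symmetric])
  show ?thesis unfolding sum3 lam3 cmod_power2
    by (simp add: power2_eq_square algebra_simps s3)
qed


lemma rho_facts:
  assumes us: "unit_state dA dB psi"
  shows "reduced_state dA dB psi \<in> carrier_mat dA dA"
    "mat_adjoint (reduced_state dA dB psi) = reduced_state dA dB psi"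
    "(\<Sum>a<dA. reduced_state dA dB psi $$ (a,a)) = 1"
proof -
  let ?r = "reduced_state dA dB psi"
  show rc: "?r \<in> carrier_mat dA dA" unfolding reduced_state_def by simp
  show "mat_adjoint ?r = ?r"
  proof (rule eq_matI)
    fix i j assume ij: "i < dim_row ?r" "j < dim_col ?r"
    then have ij': "i < dA" "j < dA" using rc by auto
    show "mat_adjoint ?r $$ (i,j) = ?r $$ (i,j)"
      using ij' unfolding reduced_state_def by (simp add: cnj_sum mult.commute)
  qed (use rc in auto)
  have psi: "psi \<in> carrier_vec (dA*dB)" and nrm: "(\<Sum>i<dA * dB. (cmod (psi $ i))\<^sup>2) = 1"
    using us unfolding unit_state_def by auto
  have "(\<Sum>a<dA. ?r $$ (a,a)) = (\<Sum>a<dA. \<Sum>b<dB. psi $ (a*dB+b) * cnj (psi $ (a*dB+b)))"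
    unfolding reduced_state_def by (intro sum.cong refl) simp
  also have "\<dots> = (\<Sum>a<dA. \<Sum>b<dB. complex_of_real ((cmod (psi $ (a*dB+b)))\<^sup>2))"
    by (simp only: complex_norm_square)
  also have "\<dots> = complex_of_real (\<Sum>i<dA * dB. (cmod (psi $ i))\<^sup>2)"
    by (simp only: of_real_sum sum_split_prod)
  also have "\<dots> = 1" using nrm by simp
  finally show "(\<Sum>a<dA. ?r $$ (a,a)) = 1" .
qed

lemma psum_one:
  assumes V: "unitary_mat n V" and r: "r = V * dmat n (\<lambda>i. complex_of_real (p i)) * mat_adjoint V"
    and tr: "(\<Sum>a<n. r $$ (a,a)) = 1"
  shows "(\<Sum>i<n. p i) = 1"
proof -
  have Vc: "V \<in> carrier_mat n n" using V unitary_carrier by auto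
  have "(\<Sum>a<n. r $$ (a,a)) = (\<Sum>a<n. \<Sum>j<n. V $$ (a,j) * complex_of_real (p j) * cnj (V $$ (a,j)))"
    unfolding r
  proof (rule sum.cong[OF refl])
    fix a assume "a \<in> {..<n}"
    then show "(V * dmat n (\<lambda>i. complex_of_real (p i)) * mat_adjoint V) $$ (a, a) = (\<Sum>j<n. V $$ (a,j) * complex_of_real (p j) * cnj (V $$ (a,j)))"
      using udu_index[OF Vc, of a a] by simp
  qed
  also have "\<dots> = (\<Sum>j<n. complex_of_real (p j) * (\<Sum>a<n. complex_of_real ((cmod (V $$ (a,j)))\<^sup>2)))"
    by (subst sum.swap) (simp add: sum_distrib_left complex_norm_square mult_ac del: of_real_power)
  also have "\<dots> = (\<Sum>j<n. complex_of_real (p j))"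
  proof (intro sum.cong refl)
    fix j assume "j \<in> {..<n}"
    then have "(\<Sum>a<n. (cmod (V $$ (a,j)))\<^sup>2) = 1" using unitary_rows(2)[OF V] by simp
    then have "(\<Sum>a<n. complex_of_real ((cmod (V $$ (a,j)))\<^sup>2)) = 1" by (metis of_real_1 of_real_sum)
    then show "complex_of_real (p j) * (\<Sum>a<n. complex_of_real ((cmod (V $$ (a,j)))\<^sup>2)) = complex_of_real (p j)" by simp
  qed
  finally have "complex_of_real (\<Sum>j<n. p j) = 1" using tr by simp
  then show ?thesis using of_real_eq_1_iff by blast
qed


lemma unitary_normal: "unitary_mat n W \<Longrightarrow> W * mat_adjoint W = mat_adjoint W * W"
  unfolding unitary_mat_def by simp

lemma prod_list_upt: "(\<Prod>x\<leftarrow>map e [0..<n]. [:- x, 1:]) = (\<Prod>i<n. [:- e i, 1 :: 'a :: comm_ring_1:])"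
  by (simp add: prod.list_conv_set_nth lessThan_atLeast0)

lemma upper_bound:
  assumes V: "unitary_mat dA V"
    and r: "reduced_state dA dB psi = V * dmat dA (\<lambda>i. complex_of_real (p i)) * mat_adjoint V"
    and psi: "psi \<in> carrier_vec (dA*dB)"
    and W: "stellar_unitary dA W"
  shows "\<exists>\<sigma>. \<sigma> permutes {..<dA} \<and> cmod (expect psi (tensor_id dA dB W)) \<le> cmod (\<Sum>i<dA. stellar_lambda dA i * of_real (p (\<sigma> i)))"
proof -
  let ?n = dA
  let ?l = "stellar_lambda dA"
  have Wu: "unitary_mat dA W" and cp: "char_poly W = (\<Prod>i<dA. [:- ?l i, 1:])"
    using W unfolding stellar_unitary_def by auto
  have Wc: "W \<in> carrier_mat dA dA" using Wu unitary_carrier by auto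
  obtain U where U: "unitary_mat dA U" and WU: "W = U * dmat dA ?l * mat_adjoint U"
    using spectral[OF Wc unitary_normal[OF Wu] cp] by blast
  have Uc: "U \<in> carrier_mat dA dA" and Vc: "V \<in> carrier_mat dA dA" using U V unitary_carrier by auto
  define X where "X = mat_adjoint U * V"
  have Xu: "unitary_mat dA X" unfolding X_def by (rule unitary_mult[OF unitary_adj[OF U] V])
  define B where "B j i = (cmod (X $$ (j,i)))\<^sup>2" for j i
  define z where "z = expect psi (tensor_id dA dB W)"
  have zf: "z = (\<Sum>j<dA. \<Sum>i<dA. ?l j * complex_of_real (p i) * complex_of_real (B j i))"
    unfolding z_def expect_formula[OF psi] r WU B_def X_def by (rule quad_formula[OF Uc Vc])
  define c where "c = (if z = 0 then 0 else cnj z / complex_of_real (cmod z))"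
  have cz: "c * z = complex_of_real (cmod z)"
  proof (cases "z = 0")
    case True then show ?thesis unfolding c_def by simp
  next
    case False
    have "cnj z * z = complex_of_real ((cmod z)\<^sup>2)" using complex_norm_square[of z] by (simp add: mult.commute)
    then show ?thesis unfolding c_def using False by (simp add: power2_eq_square field_simps)
  qed
  have cn: "cmod c \<le> 1"
    unfolding c_def by (auto simp: norm_divide)
  define q where "q j = Re (c * ?l j)" for j
  have Rez: "cmod z = (\<Sum>j<dA. \<Sum>i<dA. B j i * q j * p i)"
  proof -
    have "cmod z = Re (c * z)" using cz by simp
    also have "\<dots> = (\<Sum>j<dA. \<Sum>i<dA. Re (c * (?l j * complex_of_real (p i) * complex_of_real (B j i))))"
      unfolding zf by (simp add: sum_distrib_left)
    also have "\<dots> = (\<Sum>j<dA. \<Sum>i<dA. B j i * q j * p i)"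
      unfolding q_def by (intro sum.cong refl) (simp add: algebra_simps)
    finally show ?thesis .
  qed
  have nn: "B j i \<ge> 0" for j i unfolding B_def by simp
  have rows: "(\<Sum>i<dA. B j i) = 1" if "j < dA" for j unfolding B_def using unitary_rows(1)[OF Xu that] .
  have cols: "(\<Sum>j<dA. B j i) = 1" if "i < dA" for i unfolding B_def using unitary_rows(2)[OF Xu that] .
  obtain \<sigma> where \<sigma>: "\<sigma> permutes {..<dA}" and le: "(\<Sum>j<dA. \<Sum>i<dA. B j i * q j * p i) \<le> (\<Sum>j<dA. q j * p (\<sigma> j))"
    using birkhoff_rank1[of dA B q p] nn rows cols by blast
  define S where "S = (\<Sum>i<dA. ?l i * of_real (p (\<sigma> i)))"
  have "(\<Sum>j<dA. q j * p (\<sigma> j)) = Re (c * S)"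
    unfolding q_def S_def by (simp add: sum_distrib_left left_diff_distrib mult.assoc)
  also have "\<dots> \<le> cmod (c * S)" by (rule complex_Re_le_cmod)
  also have "\<dots> \<le> cmod S" using cn by (simp add: norm_mult mult_left_le_one_le)
  finally have "cmod z \<le> cmod S" using Rez le by linarith
  then show ?thesis unfolding z_def S_def using \<sigma> by blast
qed

lemma lower_bound:
  assumes V: "unitary_mat dA V"
    and r: "reduced_state dA dB psi = V * dmat dA (\<lambda>i. complex_of_real (p i)) * mat_adjoint V"
    and psi: "psi \<in> carrier_vec (dA*dB)"
    and \<sigma>: "\<sigma> permutes {..<dA}"
  shows "\<exists>W. stellar_unitary dA W \<and> expect psi (tensor_id dA dB W) = (\<Sum>i<dA. stellar_lambda dA i * of_real (p (\<sigma> i)))"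
proof -
  let ?l = "stellar_lambda dA"
  define mu where "mu k = ?l (inv_into UNIV \<sigma> k)" for k
  define W where "W = V * dmat dA mu * mat_adjoint V"
  have Vc: "V \<in> carrier_mat dA dA" using V unitary_carrier by auto
  have Du: "unitary_mat dA (dmat dA mu)" unfolding mu_def by (rule dmat_unitary) simp
  have Wu: "unitary_mat dA W" unfolding W_def
    by (rule unitary_mult[OF unitary_mult[OF V Du] unitary_adj[OF V]])
  have sim: "similar_mat W (dmat dA mu)"
    unfolding similar_mat_def similar_mat_wit_def Let_def W_def
    using V Vc unfolding unitary_mat_def
    by (intro exI[of _ V] exI[of _ "mat_adjoint V"]) auto
  have ut: "upper_triangular (dmat dA mu)" unfolding upper_triangular_def by auto
  have "char_poly W = char_poly (dmat dA mu)" by (rule char_poly_similar[OF sim])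
  also have "\<dots> = (\<Prod>a\<leftarrow>diag_mat (dmat dA mu). [:- a, 1:])"
    by (rule char_poly_upper_triangular[OF dmat_carrier(1) ut])
  also have "diag_mat (dmat dA mu) = map mu [0..<dA]" unfolding diag_mat_def by auto
  also have "(\<Prod>a\<leftarrow>map mu [0..<dA]. [:- a, 1:]) = (\<Prod>k<dA. [:- mu k, 1:])" by (rule prod_list_upt)
  also have "\<dots> = (\<Prod>k<dA. [:- ?l k, 1:])"
    unfolding mu_def using prod.permute[OF permutes_inv[OF \<sigma>], of "\<lambda>k. [:- ?l k, 1:]"]
    by (simp add: comp_def)
  finally have cp: "char_poly W = (\<Prod>k<dA. [:- ?l k, 1:])" .
  have sW: "stellar_unitary dA W" unfolding stellar_unitary_def using Wu cp by simp
  have "expect psi (tensor_id dA dB W) = (\<Sum>j<dA. \<Sum>i<dA. mu j * complex_of_real (p i) * complex_of_real ((cmod ((mat_adjoint V * V) $$ (j,i)))\<^sup>2))"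
    unfolding expect_formula[OF psi] r W_def by (rule quad_formula[OF Vc Vc])
  also have "\<dots> = (\<Sum>j<dA. \<Sum>i<dA. if i = j then mu j * complex_of_real (p j) else 0)"
    using V unfolding unitary_mat_def by (intro sum.cong refl) auto
  also have "\<dots> = (\<Sum>j<dA. mu j * complex_of_real (p j))" by (simp add: sum.delta)
  also have "\<dots> = (\<Sum>i<dA. ?l i * of_real (p (\<sigma> i)))"
    unfolding mu_def using sum.permute[OF \<sigma>, of "\<lambda>j. ?l (inv_into UNIV \<sigma> j) * complex_of_real (p j)"]
    by (simp add: comp_def permutes_inverses(2)[OF \<sigma>])
  finally show ?thesis using sW by blast
qed


theorem mainTheorem7:
  fixes dA dB :: nat and psi :: "complex vec" and p :: "nat \<Rightarrow> real"
  assumes "2 \<le> dA" and "dA \<le> dB"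
    and "unit_state dA dB psi"
    and "char_poly (reduced_state dA dB psi) = (\<Prod>i<dA. [:- complex_of_real (p i), 1:])"
  shows "(stellar_ent dA dB psi = linear_entropy dA p \<longleftrightarrow>
            (\<forall>\<sigma> \<tau>. \<sigma> permutes {..<dA} \<longrightarrow> \<tau> permutes {..<dA} \<longrightarrow>
               cmod (\<Sum>i<dA. stellar_lambda dA i * complex_of_real (p (\<sigma> i))) =
               cmod (\<Sum>i<dA. stellar_lambda dA i * complex_of_real (p (\<tau> i)))))
         \<and> (dA \<le> 3 \<longrightarrow> stellar_ent dA dB psi = linear_entropy dA p)"
proof -
  note d2 = assms(1) and us = assms(3) and cpr = assms(4)
  let ?r = "reduced_state dA dB psi"
  let ?l = "stellar_lambda dA"
  define S where "S \<sigma> = (\<Sum>i<dA. ?l i * complex_of_real (p (\<sigma> i)))" for \<sigma> :: "nat \<Rightarrow> nat"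
  let ?P = "{\<sigma>. \<sigma> permutes {..<dA}}"
  have psi: "psi \<in> carrier_vec (dA*dB)" using us unfolding unit_state_def by auto
  note rf = rho_facts[OF us]
  have nor: "?r * mat_adjoint ?r = mat_adjoint ?r * ?r" using rf(2) by simp
  obtain V where V: "unitary_mat dA V" and rV: "?r = V * dmat dA (\<lambda>i. complex_of_real (p i)) * mat_adjoint V"
    using spectral[OF rf(1) nor cpr] by blast
  have ps: "(\<Sum>i<dA. p i) = 1" using psum_one[OF V rV rf(3)] .
  have finP: "finite ?P" by (rule finite_permutations) simp
  have neP: "?P \<noteq> {}" using permutes_id by blast
  define M where "M = Max ((\<lambda>\<sigma>. cmod (S \<sigma>)) ` ?P)"
  have Mge: "cmod (S \<sigma>) \<le> M" if "\<sigma> \<in> ?P" for \<sigma>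
    unfolding M_def using finP that by (intro Max_ge) auto
  obtain \<sigma>0 where \<sigma>0: "\<sigma>0 \<in> ?P" and M0: "M = cmod (S \<sigma>0)"
  proof -
    have "M \<in> (\<lambda>\<sigma>. cmod (S \<sigma>)) ` ?P" unfolding M_def using finP neP by (intro Max_in) auto
    then show ?thesis using that by blast
  qed
  have M0': "M \<ge> 0" using M0 by simp
  let ?f = "\<lambda>W. (cmod (expect psi (tensor_id dA dB W)))\<^sup>2"
  have sup: "(SUP W \<in> {W. stellar_unitary dA W}. ?f W) = M\<^sup>2"
  proof (rule cSup_eq_maximum)
    obtain W0 where W0: "stellar_unitary dA W0" and e0: "expect psi (tensor_id dA dB W0) = S \<sigma>0"
      using lower_bound[OF V rV psi, of \<sigma>0] \<sigma>0 unfolding S_def by auto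
    show "M\<^sup>2 \<in> ?f ` {W. stellar_unitary dA W}" using W0 e0 M0 by (intro image_eqI[where x=W0]) auto
    fix y assume "y \<in> ?f ` {W. stellar_unitary dA W}"
    then obtain W where W: "stellar_unitary dA W" and y: "y = ?f W" by auto
    obtain \<sigma> where \<sigma>: "\<sigma> permutes {..<dA}" and le: "cmod (expect psi (tensor_id dA dB W)) \<le> cmod (S \<sigma>)"
      using upper_bound[OF V rV psi W] unfolding S_def by blast
    have "cmod (expect psi (tensor_id dA dB W)) \<le> M" using le Mge[of \<sigma>] \<sigma> by simp
    then show "y \<le> M\<^sup>2" unfolding y by (intro power_mono) auto
  qed
  have Estar: "stellar_ent dA dB psi = 1 - M\<^sup>2" unfolding stellar_ent_def sup ..
  define s where "s = (\<Sum>i<dA. (p i)\<^sup>2)"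
  define A where "A = s - (1 - s) / (real dA - 1)"
  have dm1: "real dA - 1 > 0" using d2 by simp
  have EL: "linear_entropy dA p = 1 - A"
    unfolding linear_entropy_def A_def s_def[symmetric] using dm1 by (simp add: field_simps)
  have avg: "(\<Sum>\<sigma>\<in>?P. (cmod (S \<sigma>))\<^sup>2) = fact dA * A"
    unfolding S_def A_def s_def
    by (rule avg_perm[OF d2 ps lam_sum[OF d2]]) simp
  have cardP: "card ?P = fact dA" by (rule card_permutations) auto
  have fpos: "(fact dA :: real) > 0" by simp
  have allM: "(\<forall>\<sigma>\<in>?P. cmod (S \<sigma>) = M) \<longleftrightarrow> M\<^sup>2 = A"
  proof
    assume all: "\<forall>\<sigma>\<in>?P. cmod (S \<sigma>) = M"
    have "(\<Sum>\<sigma>\<in>?P. (cmod (S \<sigma>))\<^sup>2) = (\<Sum>\<sigma>\<in>?P. M\<^sup>2)" using all by simp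
    also have "\<dots> = fact dA * M\<^sup>2" using cardP by simp
    finally show "M\<^sup>2 = A" using avg fpos by simp
  next
    assume MA: "M\<^sup>2 = A"
    have "(\<Sum>\<sigma>\<in>?P. M\<^sup>2 - (cmod (S \<sigma>))\<^sup>2) = fact dA * M\<^sup>2 - fact dA * A"
      using avg cardP by (simp add: sum_subtractf)
    also have "\<dots> = 0" using MA by simp
    finally have z: "(\<Sum>\<sigma>\<in>?P. M\<^sup>2 - (cmod (S \<sigma>))\<^sup>2) = 0" .
    have nn: "\<forall>\<sigma>\<in>?P. M\<^sup>2 - (cmod (S \<sigma>))\<^sup>2 \<ge> 0"
    proof
      fix \<sigma> assume "\<sigma> \<in> ?P"
      then have "cmod (S \<sigma>) \<le> M" by (rule Mge)
      then have "(cmod (S \<sigma>))\<^sup>2 \<le> M\<^sup>2" by (rule power_mono) simp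
      then show "M\<^sup>2 - (cmod (S \<sigma>))\<^sup>2 \<ge> 0" by simp
    qed
    have "\<forall>\<sigma>\<in>?P. M\<^sup>2 - (cmod (S \<sigma>))\<^sup>2 = 0"
      using iffD1[OF sum_nonneg_eq_0_iff[OF finP, of "\<lambda>\<sigma>. M\<^sup>2 - (cmod (S \<sigma>))\<^sup>2"] z] nn by blast
    then show "\<forall>\<sigma>\<in>?P. cmod (S \<sigma>) = M"
    proof (intro ballI)
      fix \<sigma> assume "\<forall>\<sigma>\<in>?P. M\<^sup>2 - (cmod (S \<sigma>))\<^sup>2 = 0" "\<sigma> \<in> ?P"
      then have "(cmod (S \<sigma>))\<^sup>2 = M\<^sup>2" by simp
      then show "cmod (S \<sigma>) = M" using M0' power2_eq_iff_nonneg[of "cmod (S \<sigma>)" M] by simp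
    qed
  qed
  have rhs: "(\<forall>\<sigma> \<tau>. \<sigma> permutes {..<dA} \<longrightarrow> \<tau> permutes {..<dA} \<longrightarrow> cmod (S \<sigma>) = cmod (S \<tau>))
      \<longleftrightarrow> (\<forall>\<sigma>\<in>?P. cmod (S \<sigma>) = M)"
  proof
    assume H: "\<forall>\<sigma> \<tau>. \<sigma> permutes {..<dA} \<longrightarrow> \<tau> permutes {..<dA} \<longrightarrow> cmod (S \<sigma>) = cmod (S \<tau>)"
    show "\<forall>\<sigma>\<in>?P. cmod (S \<sigma>) = M"
    proof
      fix \<sigma> assume "\<sigma> \<in> ?P"
      then have "\<sigma> permutes {..<dA}" "\<sigma>0 permutes {..<dA}" using \<sigma>0 by auto
      then have "cmod (S \<sigma>) = cmod (S \<sigma>0)" using H by blast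
      then show "cmod (S \<sigma>) = M" using M0 by simp
    qed
  next
    assume H: "\<forall>\<sigma>\<in>?P. cmod (S \<sigma>) = M"
    show "\<forall>\<sigma> \<tau>. \<sigma> permutes {..<dA} \<longrightarrow> \<tau> permutes {..<dA} \<longrightarrow> cmod (S \<sigma>) = cmod (S \<tau>)"
    proof (intro allI impI)
      fix \<sigma> \<tau> assume "\<sigma> permutes {..<dA}" "\<tau> permutes {..<dA}"
      then have "cmod (S \<sigma>) = M" "cmod (S \<tau>) = M" using H by auto
      then show "cmod (S \<sigma>) = cmod (S \<tau>)" by simp
    qed
  qed
  have part1: "stellar_ent dA dB psi = linear_entropy dA p \<longleftrightarrow>
      (\<forall>\<sigma> \<tau>. \<sigma> permutes {..<dA} \<longrightarrow> \<tau> permutes {..<dA} \<longrightarrow> cmod (S \<sigma>) = cmod (S \<tau>))"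
    unfolding rhs allM Estar EL by auto
  have part2: "stellar_ent dA dB psi = linear_entropy dA p" if d3: "dA \<le> 3"
  proof -
    have const: "(cmod (S \<sigma>))\<^sup>2 = (cmod (S id))\<^sup>2" if \<sigma>: "\<sigma> permutes {..<dA}" for \<sigma>
    proof -
      have L: "(\<Sum>i<dA. p (\<sigma> i)) = (\<Sum>i<dA. p i)"
        using sum.permute[OF \<sigma>, of p] by (simp add: comp_def)
      have Q: "(\<Sum>i<dA. (p (\<sigma> i))\<^sup>2) = (\<Sum>i<dA. (p i)\<^sup>2)"
        using sum.permute[OF \<sigma>, of "\<lambda>i. (p i)\<^sup>2"] by (simp add: comp_def)
      have "dA = 2 \<or> dA = 3" using d2 d3 by auto
      then show ?thesis
      proof
        assume d: "dA = 2"
        have a: "(cmod (S \<sigma>))\<^sup>2 = 2 * ((p (\<sigma> 0))\<^sup>2 + (p (\<sigma> 1))\<^sup>2) - (p (\<sigma> 0) + p (\<sigma> 1))\<^sup>2"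
          unfolding S_def d by (rule S2)
        have b: "(cmod (S id))\<^sup>2 = 2 * ((p 0)\<^sup>2 + (p 1)\<^sup>2) - (p 0 + p 1)\<^sup>2"
          unfolding S_def d using S2[of p] by simp
        show ?thesis unfolding a b using L Q unfolding d sum2 by simp
      next
        assume d: "dA = 3"
        have a: "(cmod (S \<sigma>))\<^sup>2 = (3 * ((p (\<sigma> 0))\<^sup>2 + (p (\<sigma> 1))\<^sup>2 + (p (\<sigma> 2))\<^sup>2) - (p (\<sigma> 0) + p (\<sigma> 1) + p (\<sigma> 2))\<^sup>2) / 2"
          unfolding S_def d by (rule S3)
        have b: "(cmod (S id))\<^sup>2 = (3 * ((p 0)\<^sup>2 + (p 1)\<^sup>2 + (p 2)\<^sup>2) - (p 0 + p 1 + p 2)\<^sup>2) / 2"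
          unfolding S_def d using S3[of p] by simp
        show ?thesis unfolding a b using L Q unfolding d sum3 by simp
      qed
    qed
    have "\<forall>\<sigma>\<in>?P. cmod (S \<sigma>) = cmod (S id)"
    proof
      fix \<sigma> assume "\<sigma> \<in> ?P"
      then have "(cmod (S \<sigma>))\<^sup>2 = (cmod (S id))\<^sup>2" using const[of \<sigma>] by simp
      then show "cmod (S \<sigma>) = cmod (S id)" using power2_eq_iff_nonneg[of "cmod (S \<sigma>)" "cmod (S id)"] by simp
    qed
    then have all: "\<forall>\<sigma>\<in>?P. cmod (S \<sigma>) = cmod (S id)" .
    have idM: "cmod (S id) = M" using bspec[OF all \<sigma>0] M0 by simp
    have "\<forall>\<sigma>\<in>?P. cmod (S \<sigma>) = M"
    proof
      fix \<sigma> assume "\<sigma> \<in> ?P"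
      from bspec[OF all this] idM show "cmod (S \<sigma>) = M" by simp
    qed
    then show ?thesis using part1 rhs by blast
  qed
  show ?thesis using part1 part2 unfolding S_def by blast
qed


end
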